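(* Let $n\in\mathbb{N}$, $0<\sigma_1^2<\sigma_2^2$, $\mathsf{R}>0$, and let $P_{\mathbf{X}^\star}$ be a probability distribution supported in $\mathcal{B}_0(\mathsf{R})=\{\mathbf{x}\in\mathbb{R}^n:\|\mathbf{x}\|\le\mathsf{R}\}$, with induced output densities $f_{\mathbf{Y}_1^\star},f_{\mathbf{Y}_2^\star}$. Define, for $\mathbf{x}\in\mathbb{R}^n$, \[ \Xi(\mathbf{x};P_{\mathbf{X}^\star})=\mathsf{D}(f_{\mathbf{Y}_1|\mathbf{X}}(\cdot| \mathbf{x}) \|f_{\mathbf{Y}_1^\star})- \mathsf{D}(f_{\mathbf{Y}_2|\mathbf{X}}(\cdot|\mathbf{x}) \|f_{\mathbf{Y}_2^\star}), \] and for $\mathbf{y}\in\mathbb{R}^n$, \[ g(\mathbf{y})=\mathbb{E}\left[\log\frac{f_{\mathbf{Y}_2^\star}(\mathbf{y}+\mathbf{N})}{f_{\mathbf{Y}_1^\star}(\mathbf{y})}\right]+ n \log\left(\frac{\sigma_2}{\sigma_1}\right), \] with $\mathbf{N}\sim\mathcal{N}(\mathbf{0}_n,(\sigma_2^2-\sigma_1^2)\mathbf{I}_n)$. Then $\Xi(\mathbf{x};P_{\mathbf{X}^\star})=\mathbb{E}[g(\mathbf{Y}_1)\mid\mathbf{X}=\mathbf{x}]$ for all $\mathbf{x}\in\mathbb{R}^n$, and $P_{\mathbf{X}^\star}$ attains $C_s(\sigma_1^2,\sigma_2^2,\mathsf{R},n)$ if and only if \[ \Xi(\mathbf{x};P_{\mathbf{X}^\star})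 = C_s(\sigma_1^2, \sigma_2^2,\mathsf{R},n) \text{ for } \mathbf{x} \in \mathrm{supp}(P_{\mathbf{X}^\star}),\qquad \Xi(\mathbf{x};P_{\mathbf{X}^\star}) \le C_s(\sigma_1^2, \sigma_2^2, \mathsf{R},n) \text{ for } \mathbf{x} \in \mathcal{B}_0(\mathsf{R}). \]
   Context: Vector Gaussian wiretap channel: $\mathbf{Y}_1=\mathbf{X}+\mathbf{N}_1$, $\mathbf{Y}_2=\mathbf{X}+\mathbf{N}_2$, $\mathbf{N}_1\sim\mathcal{N}(\mathbf{0}_n,\sigma_1^2\mathbf{I}_n)$, $\mathbf{N}_2\sim\mathcal{N}(\mathbf{0}_n,\sigma_2^2\mathbf{I}_n)$, mutually independent with $\mathbf{X}$; $f_{\mathbf{Y}_i|\mathbf{X}}(\cdot|\mathbf{x})$ is the $\mathcal{N}(\mathbf{x},\sigma_i^2\mathbf{I}_n)$ density and $\mathbb{E}[\cdot\mid\mathbf{X}=\mathbf{x}]$ is with respect to $\mathbf{Y}_1\sim\mathcal{N}(\mathbf{x},\sigma_1^2\mathbf{I}_n)$. $C_s(\sigma_1^2,\sigma_2^2,\mathsf{R},n)=\max I(\mathbf{X};\mathbf{Y}_1)-I(\mathbf{X};\mathbf{Y}_2)$ over distributions supported in $\mathcal{B}_0(\mathsf{R})$. $\mathsf{D}$ is relative entropy; $\mathrm{supp}$ is the support of a distribution. *)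

theory Defs
  imports "HOL-Probability.Probability"
begin

definition gauss_dens :: "real \<Rightarrow> 'a::euclidean_space \<Rightarrow> 'a \<Rightarrow> real" where
  "gauss_dens s x y = (2 * pi * s) powr (- real DIM('a) / 2) * exp (- (norm (y - x))\<^sup>2 / (2 * s))"

text \<open>Output density of Y = X + N, N ~ N(0, s I_n), X ~ P.\<close>
definition out_dens :: "real \<Rightarrow> 'a::euclidean_space measure \<Rightarrow> 'a \<Rightarrow> real" where
  "out_dens s P y = (\<integral>x. gauss_dens s x y \<partial>P)"

definition rel_ent :: "('a::euclidean_space \<Rightarrow> real) \<Rightarrow> ('a \<Rightarrow> real) \<Rightarrow> real" where
  "rel_ent f g = (\<integral>y. f y * ln (f y / g y) \<partial>lborel)"

definition mutual_info :: "real \<Rightarrow> 'a::euclidean_space measure \<Rightarrow> real" where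
  "mutual_info s P = (\<integral>x. rel_ent (gauss_dens s x) (out_dens s P) \<partial>P)"

definition input_dist :: "real \<Rightarrow> 'a::euclidean_space measure \<Rightarrow> bool" where
  "input_dist R P \<longleftrightarrow> prob_space P \<and> sets P = sets borel \<and> emeasure P (- cball 0 R) = 0"

definition secrecy_cap :: "real \<Rightarrow> real \<Rightarrow> real \<Rightarrow> 'a::euclidean_space itself \<Rightarrow> real" where
  "secrecy_cap s1 s2 R _ =
     Sup {mutual_info s1 P - mutual_info s2 (P :: 'a measure) | P. input_dist R P}"

definition supp :: "'a::metric_space measure \<Rightarrow> 'a set" where
  "supp P = {x. \<forall>e>0. emeasure P (ball x e) > 0}"

definition Xi :: "real \<Rightarrow> real \<Rightarrow> 'a::euclidean_space measure \<Rightarrow> 'a \<Rightarrow> real" where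
  "Xi s1 s2 P x = rel_ent (gauss_dens s1 x) (out_dens s1 P) - rel_ent (gauss_dens s2 x) (out_dens s2 P)"

definition gfun :: "real \<Rightarrow> real \<Rightarrow> 'a::euclidean_space measure \<Rightarrow> 'a \<Rightarrow> real" where
  "gfun s1 s2 P y = (\<integral>z. gauss_dens (s2 - s1) 0 z * ln (out_dens s2 P (y + z) / out_dens s1 P y) \<partial>lborel)
      + real DIM('a) * ln (sqrt s2 / sqrt s1)"

end

theory Submission
  imports Defs
begin

lemma norm_sq_basis: "(norm (y::'a::euclidean_space))\<^sup>2 = (\<Sum>b\<in>Basis. (y \<bullet> b)\<^sup>2)"
  unfolding power2_norm_eq_inner by (subst euclidean_inner) (simp add: power2_eq_square)

lemma gauss_const: 
  assumes "0 < s"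
  shows "(2 * pi * s) powr (- real DIM('a::euclidean_space) / 2) = (1 / sqrt (2 * pi * s)) ^ DIM('a)"
proof -
  have p: "0 < 2 * pi * s" using assms by simp
  have "(2 * pi * s) powr (- real DIM('a) / 2) = inverse (((2 * pi * s) powr (1/2)) powr real DIM('a))"
    by (simp add: powr_powr powr_minus)
  also have "\<dots> = inverse ((sqrt (2 * pi * s)) ^ DIM('a))"
    using p by (simp add: powr_half_sqrt powr_realpow)
  finally show ?thesis by (simp add: power_one_over inverse_eq_divide)
qed

lemma gauss_prod:
  assumes "0 < s"
  shows "gauss_dens s 0 (y::'a::euclidean_space) = (\<Prod>b\<in>Basis. normal_density 0 (sqrt s) (y \<bullet> b))"
proof -
  have "(\<Prod>b\<in>Basis. normal_density 0 (sqrt s) (y \<bullet> b))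
      = (\<Prod>b\<in>(Basis::'a set). 1 / sqrt (2 * pi * s) * exp (- (y \<bullet> b)\<^sup>2 / (2 * s)))"
    using assms by (simp add: normal_density_def)
  also have "\<dots> = (1 / sqrt (2 * pi * s)) ^ DIM('a) * exp (\<Sum>b\<in>(Basis::'a set). - (y \<bullet> b)\<^sup>2 / (2 * s))"
    by (simp only: prod.distrib prod_constant exp_sum[OF finite_Basis])
  also have "(\<Sum>b\<in>(Basis::'a set). - (y \<bullet> b)\<^sup>2 / (2 * s)) = - (norm y)\<^sup>2 / (2 * s)"
    by (simp add: norm_sq_basis sum_divide_distrib sum_negf)
  finally show ?thesis using gauss_const[OF assms, where 'a='a] by (simp add: gauss_dens_def)
qed

lemma gauss_meas[measurable]:
  assumes [measurable]: "f \<in> borel_measurable M" "g \<in> borel_measurable M"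
  shows "(\<lambda>p. gauss_dens s (f p) (g p)) \<in> borel_measurable M"
  unfolding gauss_dens_def by measurable

lemma gauss_nonneg[simp]: "0 \<le> gauss_dens s x y"
  by (simp add: gauss_dens_def)

lemma gauss_pos: "0 < s \<Longrightarrow> 0 < gauss_dens s x y"
  by (simp add: gauss_dens_def)

lemma gauss_shift: "gauss_dens s x y = gauss_dens s 0 (y - x)"
  by (simp add: gauss_dens_def)

lemma lborel_nn_shift:
  fixes c :: "'a::euclidean_space"
  assumes [measurable]: "f \<in> borel_measurable borel"
  shows "(\<integral>\<^sup>+y. f (c + y) \<partial>lborel) = (\<integral>\<^sup>+y. f y \<partial>lborel)"
proof -
  have "(\<integral>\<^sup>+y. f y \<partial>lborel) = (\<integral>\<^sup>+y. f y \<partial>(distr lborel borel ((+) c)))"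
    by (simp add: lborel_distr_plus)
  also have "\<dots> = (\<integral>\<^sup>+y. f (c + y) \<partial>lborel)"
    by (subst nn_integral_distr) auto
  finally show ?thesis ..
qed

lemma lborel_int_shift:
  fixes c :: "'a::euclidean_space" and f :: "'a \<Rightarrow> real"
  assumes [measurable]: "f \<in> borel_measurable borel"
  shows "(\<integral>y. f (c + y) \<partial>lborel) = (\<integral>y. f y \<partial>lborel)"
    and "integrable lborel (\<lambda>y. f (c + y)) \<longleftrightarrow> integrable lborel f"
proof -
  have "(\<integral>y. f y \<partial>lborel) = (\<integral>y. f y \<partial>(distr lborel borel ((+) c)))"
    by (simp add: lborel_distr_plus)
  also have "\<dots> = (\<integral>y. f (c + y) \<partial>lborel)"
    by (subst integral_distr) auto
  finally show "(\<integral>y. f (c + y) \<partial>lborel) = (\<integral>y. f y \<partial>lborel)" ..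
  have "integrable lborel f \<longleftrightarrow> integrable (distr lborel borel ((+) c)) f"
    by (simp add: lborel_distr_plus)
  also have "\<dots> \<longleftrightarrow> integrable lborel (\<lambda>y. f (c + y))"
    by (subst integrable_distr_eq) auto
  finally show "integrable lborel (\<lambda>y. f (c + y)) \<longleftrightarrow> integrable lborel f" ..
qed

lemma nd_nn1: "0 < s \<Longrightarrow> (\<integral>\<^sup>+t. ennreal (normal_density 0 (sqrt s) t) \<partial>lborel) = 1"
  by (subst nn_integral_eq_integral) auto

lemma nd_nn2: "0 < s \<Longrightarrow> (\<integral>\<^sup>+t. ennreal (normal_density 0 (sqrt s) t * t\<^sup>2) \<partial>lborel) = ennreal s"
proof -
  assume s: "0 < s"
  have h: "has_bochner_integral lborel (\<lambda>t. normal_density 0 (sqrt s) t * t\<^sup>2) s"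
    using normal_moment_even[where k=1 and \<mu>=0 and \<sigma>="sqrt s"] s by (simp add: numeral_2_eq_2)
  show ?thesis
    using h integrable.intros[OF h] has_bochner_integral_integral_eq[OF h] by (subst nn_integral_eq_integral) auto
qed

lemma gauss_nn0:
  assumes s: "0 < s"
  shows "(\<integral>\<^sup>+y. ennreal (gauss_dens s 0 (y::'a::euclidean_space)) \<partial>lborel) = 1"
proof -
  have "(\<integral>\<^sup>+y. ennreal (gauss_dens s 0 (y::'a)) \<partial>lborel)
     = (\<integral>\<^sup>+y. (\<Prod>b\<in>Basis. ennreal (normal_density 0 (sqrt s) ((y::'a) \<bullet> b))) \<partial>lborel)"
    by (simp add: gauss_prod[OF s] prod_ennreal)
  also have "\<dots> = (\<Prod>b\<in>(Basis::'a set). (\<integral>\<^sup>+t. ennreal (normal_density 0 (sqrt s) t) \<partial>lborel))"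
    by (rule nn_integral_lborel_prod) auto
  also have "\<dots> = 1" using nd_nn1[OF s] by simp
  finally show ?thesis .
qed

lemma gauss_nn2:
  assumes s: "0 < s"
  shows "(\<integral>\<^sup>+y. ennreal (gauss_dens s 0 (y::'a::euclidean_space) * (norm y)\<^sup>2) \<partial>lborel) = ennreal (real DIM('a) * s)"
proof -
  have "(\<integral>\<^sup>+y. ennreal (gauss_dens s 0 (y::'a) * (norm y)\<^sup>2) \<partial>lborel)
     = (\<integral>\<^sup>+y. (\<Sum>b\<in>Basis. ennreal (gauss_dens s 0 (y::'a) * (y \<bullet> b)\<^sup>2)) \<partial>lborel)"
    by (simp add: norm_sq_basis sum_distrib_left)
  also have "\<dots> = (\<Sum>b\<in>(Basis::'a set). (\<integral>\<^sup>+y. ennreal (gauss_dens s 0 y * (y \<bullet> b)\<^sup>2) \<partial>lborel))"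
    by (rule nn_integral_sum) auto
  also have "\<dots> = (\<Sum>b\<in>(Basis::'a set). ennreal s)"
  proof (rule sum.cong[OF refl])
    fix b :: 'a assume b: "b \<in> Basis"
    have "(\<integral>\<^sup>+y. ennreal (gauss_dens s 0 y * (y \<bullet> b)\<^sup>2) \<partial>lborel)
      = (\<integral>\<^sup>+y. (\<Prod>b'\<in>(Basis::'a set). ennreal (normal_density 0 (sqrt s) (y \<bullet> b') * (if b' = b then (y \<bullet> b')\<^sup>2 else 1))) \<partial>lborel)"
      using b by (simp add: gauss_prod[OF s] prod_ennreal prod.distrib prod.delta)
    also have "\<dots> = (\<Prod>b'\<in>(Basis::'a set). (\<integral>\<^sup>+t. ennreal (normal_density 0 (sqrt s) t * (if b' = b then t\<^sup>2 else 1)) \<partial>lborel))"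
      by (rule nn_integral_lborel_prod) auto
    also have "\<dots> = (\<Prod>b'\<in>(Basis::'a set). (if b' = b then ennreal s else 1))"
      by (rule prod.cong[OF refl]) (simp add: nd_nn1[OF s] nd_nn2[OF s])
    also have "\<dots> = ennreal s" using b by (simp add: prod.delta)
    finally show "(\<integral>\<^sup>+y. ennreal (gauss_dens s 0 y * (y \<bullet> b)\<^sup>2) \<partial>lborel) = ennreal s" .
  qed
  also have "\<dots> = ennreal (real DIM('a) * s)" using s by (simp add: ennreal_mult' ennreal_of_nat_eq_real_of_nat)
  finally show ?thesis .
qed

lemma gauss_hb1:
  assumes s: "0 < s"
  shows "has_bochner_integral lborel (gauss_dens s (x::'a::euclidean_space)) 1"
proof (rule has_bochner_integral_nn_integral)
  have "(\<integral>\<^sup>+y. ennreal (gauss_dens s x y) \<partial>lborel) = (\<integral>\<^sup>+y. ennreal (gauss_dens s x (x + y)) \<partial>lborel)"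
    by (rule lborel_nn_shift[symmetric]) measurable
  also have "\<dots> = (\<integral>\<^sup>+y. ennreal (gauss_dens s 0 (y::'a)) \<partial>lborel)"
    by (simp add: gauss_shift[of s x])
  also have "\<dots> = 1" by (rule gauss_nn0[OF s])
  finally show "(\<integral>\<^sup>+y. ennreal (gauss_dens s x y) \<partial>lborel) = ennreal 1" by simp
qed auto

lemma gauss_hb2:
  assumes s: "0 < s"
  shows "has_bochner_integral lborel (\<lambda>y. gauss_dens s (x::'a::euclidean_space) y * (norm (y - x))\<^sup>2) (real DIM('a) * s)"
proof (rule has_bochner_integral_nn_integral)
  have "(\<integral>\<^sup>+y. ennreal (gauss_dens s x y * (norm (y - x))\<^sup>2) \<partial>lborel) 
     = (\<integral>\<^sup>+y. ennreal (gauss_dens s x (x + y) * (norm ((x + y) - x))\<^sup>2) \<partial>lborel)"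
    by (rule lborel_nn_shift[symmetric]) measurable
  also have "\<dots> = (\<integral>\<^sup>+y. ennreal (gauss_dens s 0 (y::'a) * (norm y)\<^sup>2) \<partial>lborel)"
    by (simp add: gauss_shift[of s x])
  also have "\<dots> = ennreal (real DIM('a) * s)" by (rule gauss_nn2[OF s])
  finally show "(\<integral>\<^sup>+y. ennreal (gauss_dens s x y * (norm (y - x))\<^sup>2) \<partial>lborel) = ennreal (real DIM('a) * s)" .
qed (use s in auto)

lemma gauss_int1[simp]: "0 < s \<Longrightarrow> integrable lborel (gauss_dens s x)"
  using gauss_hb1 integrable.intros by blast

lemma gauss_integral1[simp]: "0 < s \<Longrightarrow> (\<integral>y. gauss_dens s x y \<partial>lborel) = 1"
  using gauss_hb1 has_bochner_integral_integral_eq by blast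

lemma gauss_int2: "0 < s \<Longrightarrow> integrable lborel (\<lambda>y. gauss_dens s x y * (norm (y - x))\<^sup>2)"
  using gauss_hb2 integrable.intros by blast

lemma gauss_integral2: "0 < s \<Longrightarrow> (\<integral>y. gauss_dens s x y * (norm (y - x))\<^sup>2 \<partial>lborel) = real DIM('a) * s"
  for x :: "'a::euclidean_space"
  using gauss_hb2 has_bochner_integral_integral_eq by blast

lemma norm_sq_le: "(norm (y::'a::real_normed_vector))\<^sup>2 \<le> 2 * (norm (y - x))\<^sup>2 + 2 * (norm x)\<^sup>2"
proof -
  have "norm y \<le> norm (y - x) + norm x" by (metis norm_triangle_ineq diff_add_cancel)
  hence "(norm y)\<^sup>2 \<le> (norm (y - x) + norm x)\<^sup>2" by (simp add: power_mono)
  also have "\<dots> \<le> 2 * (norm (y - x))\<^sup>2 + 2 * (norm x)\<^sup>2"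
    by (smt (verit) zero_le_power2 power2_sum sum_squares_bound)
  finally show ?thesis .
qed

lemma gauss_int_sq: 
  assumes s: "0 < s"
  shows "integrable lborel (\<lambda>y. gauss_dens s (x::'a::euclidean_space) y * (norm y)\<^sup>2)"
    and "(\<integral>y. gauss_dens s x y * (norm y)\<^sup>2 \<partial>lborel) \<le> 2 * real DIM('a) * s + 2 * (norm x)\<^sup>2"
proof -
  have b: "integrable lborel (\<lambda>y. 2 * (gauss_dens s x y * (norm (y - x))\<^sup>2) + 2 * (norm x)\<^sup>2 * gauss_dens s x y)"
    using gauss_int2[OF s, of x] gauss_int1[OF s, of x] by auto
  have le: "gauss_dens s x y * (norm y)\<^sup>2 \<le> 2 * (gauss_dens s x y * (norm (y - x))\<^sup>2) + 2 * (norm x)\<^sup>2 * gauss_dens s x y" for y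
  proof -
    have "gauss_dens s x y * (norm y)\<^sup>2 \<le> gauss_dens s x y * (2 * (norm (y - x))\<^sup>2 + 2 * (norm x)\<^sup>2)"
      by (rule mult_left_mono[OF norm_sq_le]) simp
    thus ?thesis by (simp add: algebra_simps)
  qed
  show i: "integrable lborel (\<lambda>y. gauss_dens s x y * (norm y)\<^sup>2)"
    by (rule Bochner_Integration.integrable_bound[OF b]) (auto intro!: AE_I2 simp: le)
  have "(\<integral>y. gauss_dens s x y * (norm y)\<^sup>2 \<partial>lborel) \<le> (\<integral>y. 2 * (gauss_dens s x y * (norm (y - x))\<^sup>2) + 2 * (norm x)\<^sup>2 * gauss_dens s x y \<partial>lborel)"
    by (rule integral_mono[OF i b le])
  also have "\<dots> = 2 * real DIM('a) * s + 2 * (norm x)\<^sup>2"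
    using gauss_int2[OF s, of x] gauss_int1[OF s, of x] s by (simp add: gauss_integral2)
  finally show "(\<integral>y. gauss_dens s x y * (norm y)\<^sup>2 \<partial>lborel) \<le> 2 * real DIM('a) * s + 2 * (norm x)\<^sup>2" .
qed

lemma conv_exp_id:
  fixes a b :: "'a::real_inner"
  shows "d * (t + d) * (norm a)\<^sup>2 + t * (t + d) * (norm b)\<^sup>2 = t * d * (norm (a + b))\<^sup>2 + (norm (d *\<^sub>R a - t *\<^sub>R b))\<^sup>2"
  by (simp add: power2_norm_eq_inner inner_add_left inner_add_right inner_diff_left inner_diff_right inner_commute[of b a] algebra_simps)

lemma conv_real_aux:
  fixes t d A B C D :: real
  assumes t: "0 < t" and d: "0 < d" and h: "d * (t + d) * A + t * (t + d) * B = t * d * C + D"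
  shows "- A / (2 * t) + - B / (2 * d) = - C / (2 * (t + d)) + - (D / (t + d)\<^sup>2) / (2 * (t * d / (t + d)))"
proof -
  have D: "D = d * (t + d) * A + t * (t + d) * B - t * d * C" using h by simp
  have q: "(t + d)\<^sup>2 * (2 * (t * d / (t + d))) = 2 * t * d * (t + d)"
      using t d by (simp add: power2_eq_square field_simps)
  have "- C / (2 * (t + d)) + - (D / (t + d)\<^sup>2) / (2 * (t * d / (t + d))) 
     = - C / (2 * (t + d)) - D / (2 * t * d * (t + d))"
    by (simp only: minus_divide_left divide_divide_eq_left q)
  also have "\<dots> = (- C * (t * d) - D) / (2 * t * d * (t + d))"
    using t d by (simp add: diff_divide_distrib)
  also have "\<dots> = (- A * (d * (t + d)) - B * (t * (t + d))) / (2 * t * d * (t + d))"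
    by (simp add: D algebra_simps)
  also have "\<dots> = - A / (2 * t) + - B / (2 * d)"
    using t d by (simp add: diff_divide_distrib)
  finally show ?thesis ..
qed

lemma gauss_conv_pt:
  fixes x y w :: "'a::euclidean_space"
  assumes t: "0 < t" and d: "0 < d"
  shows "gauss_dens t x y * gauss_dens d y w
       = gauss_dens (t + d) x w * gauss_dens (t * d / (t + d)) ((d / (t + d)) *\<^sub>R x + (t / (t + d)) *\<^sub>R w) y"
proof -
  define s where "s = t + d"
  define \<sigma> where "\<sigma> = t * d / (t + d)"
  define m where "m = (d / (t + d)) *\<^sub>R x + (t / (t + d)) *\<^sub>R w"
  define a where "a = y - x"
  define b where "b = w - y"
  have s: "0 < s" using t d by (simp add: s_def)
  have sg: "0 < \<sigma>" using t d by (simp add: \<sigma>_def)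
  have wx: "w - x = a + b" by (simp add: a_def b_def)
  have ym: "y - m = (1 / s) *\<^sub>R (d *\<^sub>R a - t *\<^sub>R b)"
  proof -
    have sm: "s *\<^sub>R m = d *\<^sub>R x + t *\<^sub>R w" using s by (simp add: m_def scaleR_add_right s_def)
    have "s *\<^sub>R (y - m) = d *\<^sub>R a - t *\<^sub>R b"
      by (simp add: scaleR_diff_right sm) (simp add: a_def b_def s_def algebra_simps)
    thus ?thesis using s by (metis scaleR_scaleR nonzero_divide_eq_eq order_less_irrefl divide_inverse_commute
         mult_1 inverse_eq_divide scaleR_one left_inverse)
  qed
  have c: "(2 * pi * t) powr e * (2 * pi * d) powr e = (2 * pi * s) powr e * (2 * pi * \<sigma>) powr e" for e
  proof -
    have "(2 * pi * t) * (2 * pi * d) = (2 * pi * s) * (2 * pi * \<sigma>)"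
      using s by (simp add: s_def \<sigma>_def field_simps)
    thus ?thesis using t d s sg by (metis powr_mult[symmetric] less_eq_real_def mult_pos_pos pi_gt_zero zero_less_numeral)
  qed
  have ex: "- (norm (y - x))\<^sup>2 / (2 * t) + - (norm (w - y))\<^sup>2 / (2 * d)
      = - (norm (w - x))\<^sup>2 / (2 * s) + - (norm (y - m))\<^sup>2 / (2 * \<sigma>)"
  proof -
    have n: "(norm (y - m))\<^sup>2 = (norm (d *\<^sub>R a - t *\<^sub>R b))\<^sup>2 / s\<^sup>2"
      using s by (simp add: ym power_divide)
    have "d * (t + d) * (norm a)\<^sup>2 + t * (t + d) * (norm b)\<^sup>2 = t * d * (norm (a + b))\<^sup>2 + (norm (d *\<^sub>R a - t *\<^sub>R b))\<^sup>2"
      by (rule conv_exp_id)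
    from conv_real_aux[OF t d this] show ?thesis unfolding n wx a_def[symmetric] b_def[symmetric]
      by (simp add: \<sigma>_def s_def)
  qed
  have "gauss_dens t x y * gauss_dens d y w 
      = ((2 * pi * t) powr (- real DIM('a) / 2) * (2 * pi * d) powr (- real DIM('a) / 2))
        * exp (- (norm (y - x))\<^sup>2 / (2 * t) + - (norm (w - y))\<^sup>2 / (2 * d))"
    unfolding gauss_dens_def exp_add by (simp add: ac_simps)
  also have "\<dots> = ((2 * pi * s) powr (- real DIM('a) / 2) * (2 * pi * \<sigma>) powr (- real DIM('a) / 2))
        * exp (- (norm (w - x))\<^sup>2 / (2 * s) + - (norm (y - m))\<^sup>2 / (2 * \<sigma>))"
    by (simp only: c ex)
  also have "\<dots> = gauss_dens s x w * gauss_dens \<sigma> m y"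
    unfolding gauss_dens_def exp_add by (simp add: ac_simps)
  finally show ?thesis by (simp add: s_def \<sigma>_def m_def)
qed

lemma gauss_conv:
  fixes x w :: "'a::euclidean_space"
  assumes t: "0 < t" and d: "0 < d"
  shows "(\<integral>y. gauss_dens t x y * gauss_dens d y w \<partial>lborel) = gauss_dens (t + d) x w"
    and "integrable lborel (\<lambda>y. gauss_dens t x y * gauss_dens d y w)"
proof -
  have sg: "0 < t * d / (t + d)" using t d by simp
  show "(\<integral>y. gauss_dens t x y * gauss_dens d y w \<partial>lborel) = gauss_dens (t + d) x w"
    unfolding gauss_conv_pt[OF t d] using sg by simp
  show "integrable lborel (\<lambda>y. gauss_dens t x y * gauss_dens d y w)"
    unfolding gauss_conv_pt[OF t d] using sg by simp
qed

lemma meas_Q: "sets Q = sets borel \<Longrightarrow> f \<in> borel_measurable borel \<Longrightarrow> f \<in> borel_measurable Q"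
  using measurable_cong_sets[of Q borel borel borel] by simp

lemma input_distD:
  assumes "input_dist R Q"
  shows "prob_space Q" "sets Q = sets borel" "space Q = UNIV" "AE x in Q. norm x \<le> R"
proof -
  show p: "prob_space Q" and s: "sets Q = sets borel" using assms by (auto simp: input_dist_def)
  show sp: "space Q = UNIV" using sets_eq_imp_space_eq[OF s] by simp
  have "- cball 0 R \<in> null_sets Q"
    using assms s by (auto simp: input_dist_def null_sets_def)
  then show "AE x in Q. norm x \<le> R"
    by (rule AE_I') (auto simp: sp)
qed

lemma gauss_le: "0 < s \<Longrightarrow> gauss_dens s (x::'a::euclidean_space) y \<le> gauss_dens s (0::'a::euclidean_space) 0"
  by (simp add: gauss_dens_def)

lemma gauss_eq_k: "gauss_dens s (x::'a::euclidean_space) y = gauss_dens s (0::'a::euclidean_space) 0 * exp (- (norm (y - x))\<^sup>2 / (2 * s))"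
  by (simp add: gauss_dens_def)

lemma gauss_lower:
  assumes s: "0 < s" and x: "norm x \<le> R"
  shows "gauss_dens s (0::'a::euclidean_space) 0 * exp (- (norm y + R)\<^sup>2 / (2 * s)) \<le> gauss_dens s x (y::'a)"
proof -
  have "norm (y - x) \<le> norm y + R" using x by (smt (verit) norm_triangle_ineq4)
  hence "(norm (y - x))\<^sup>2 \<le> (norm y + R)\<^sup>2" by (simp add: power_mono)
  hence "- (norm y + R)\<^sup>2 / (2 * s) \<le> - (norm (y - x))\<^sup>2 / (2 * s)" using s by (simp add: divide_right_mono)
  hence "exp (- (norm y + R)\<^sup>2 / (2 * s)) \<le> exp (- (norm (y - x))\<^sup>2 / (2 * s))" by simp
  then show ?thesis unfolding gauss_eq_k[of s x y] by (metis mult_left_mono gauss_nonneg)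
qed

lemma gauss_k_pos: "0 < s \<Longrightarrow> 0 < gauss_dens s (0::'a::euclidean_space) 0"
  by (rule gauss_pos)

lemma integrable_gauss_Q:
  assumes Q: "input_dist R Q" and s: "0 < s"
  shows "integrable Q (\<lambda>x. gauss_dens s x (y::'a::euclidean_space))"
proof -
  interpret prob_space Q using input_distD[OF Q] by simp
  show ?thesis
    by (rule integrable_const_bound[where B="gauss_dens s (0::'a) 0"])
       (use s gauss_le in \<open>auto intro!: meas_Q[OF input_distD(2)[OF Q]]\<close>)
qed

lemma out_dens_upper:
  assumes Q: "input_dist R Q" and s: "0 < s"
  shows "out_dens s Q (y::'a::euclidean_space) \<le> gauss_dens s (0::'a) 0"
proof -
  interpret prob_space Q using input_distD[OF Q] by simp
  have "out_dens s Q y \<le> (\<integral>x. gauss_dens s (0::'a) 0 \<partial>Q)"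
    unfolding out_dens_def
    by (rule integral_mono[OF integrable_gauss_Q[OF Q s]]) (auto simp: gauss_le s)
  then show ?thesis by (simp add: prob_space.prob_space[OF input_distD(1)[OF Q]])
qed

lemma out_dens_lower:
  assumes Q: "input_dist R Q" and s: "0 < s"
  shows "gauss_dens s (0::'a::euclidean_space) 0 * exp (- (norm y + R)\<^sup>2 / (2 * s)) \<le> out_dens s Q (y::'a)"
proof -
  interpret prob_space Q using input_distD[OF Q] by simp
  have "(\<integral>x. gauss_dens s (0::'a) 0 * exp (- (norm y + R)\<^sup>2 / (2 * s)) \<partial>Q) \<le> out_dens s Q y"
    unfolding out_dens_def
    by (rule integral_mono_AE[OF _ integrable_gauss_Q[OF Q s]])
       (use input_distD(4)[OF Q] gauss_lower[OF s] in auto)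
  then show ?thesis by (simp add: prob_space.prob_space[OF input_distD(1)[OF Q]])
qed

lemma out_dens_pos:
  assumes Q: "input_dist R Q" and s: "0 < s"
  shows "0 < out_dens s Q (y::'a::euclidean_space)"
  using out_dens_lower[OF Q s, of y] gauss_k_pos[OF s, where 'a='a]
  by (smt (verit) exp_gt_zero mult_pos_pos)

lemma out_dens_meas[measurable]:
  assumes Q: "input_dist R Q"
  shows "out_dens s Q \<in> borel_measurable (borel :: 'a::euclidean_space measure)"
proof -
  interpret prob_space Q using input_distD[OF Q] by simp
  have m: "(\<lambda>p::'a\<times>'a. gauss_dens s (snd p) (fst p)) \<in> borel_measurable (borel \<Otimes>\<^sub>M Q)"
  proof -
    have "sets (borel \<Otimes>\<^sub>M Q) = sets (borel \<Otimes>\<^sub>M (borel :: 'a measure))"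
      using input_distD(2)[OF Q] by (intro sets_pair_measure_cong) auto
    note e = this
    have "(\<lambda>p::'a\<times>'a. gauss_dens s (snd p) (fst p)) \<in> borel_measurable (borel \<Otimes>\<^sub>M borel)" by measurable
    then show ?thesis by (subst measurable_cong_sets[OF e refl])
  qed
  have "(\<lambda>y. \<integral>x. gauss_dens s x y \<partial>Q) \<in> borel_measurable (borel :: 'a measure)"
    by (rule borel_measurable_lebesgue_integral) (use m in \<open>simp add: case_prod_beta\<close>)
  then show ?thesis by (simp add: out_dens_def[abs_def])
qed

lemma ln_out_dens_bound:
  assumes Q: "input_dist R Q" and s: "0 < s"
  shows "\<bar>ln (out_dens s Q (y::'a::euclidean_space))\<bar> \<le> \<bar>ln (gauss_dens s (0::'a) 0)\<bar> + R\<^sup>2 / s + (norm y)\<^sup>2 / s"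
proof -
  define k where "k = gauss_dens s (0::'a) 0"
  have k: "0 < k" using gauss_k_pos[OF s] by (simp add: k_def)
  have up: "ln (out_dens s Q y) \<le> ln k"
    using out_dens_upper[OF Q s, of y] out_dens_pos[OF Q s, of y] k by (simp add: k_def)
  have "ln (k * exp (- (norm y + R)\<^sup>2 / (2 * s))) \<le> ln (out_dens s Q y)"
    using out_dens_lower[OF Q s, of y] out_dens_pos[OF Q s, of y] k by (subst ln_le_cancel_iff) (auto simp: k_def)
  hence lo: "ln k - (norm y + R)\<^sup>2 / (2 * s) \<le> ln (out_dens s Q y)"
    using k by (simp add: ln_mult)
  have "(norm y + R)\<^sup>2 \<le> 2 * (norm y)\<^sup>2 + 2 * R\<^sup>2"
    by (smt (verit) zero_le_power2 power2_sum sum_squares_bound)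
  hence "(norm y + R)\<^sup>2 / (2 * s) \<le> (2 * (norm y)\<^sup>2 + 2 * R\<^sup>2) / (2 * s)" using s by (simp add: divide_right_mono)
  also have "\<dots> = R\<^sup>2 / s + (norm y)\<^sup>2 / s" using s by (simp add: field_simps)
  finally have "(norm y + R)\<^sup>2 / (2 * s) \<le> R\<^sup>2 / s + (norm y)\<^sup>2 / s" .
  moreover have "0 \<le> R\<^sup>2 / s + (norm y)\<^sup>2 / s" using s by simp
  ultimately show ?thesis using up lo unfolding k_def[symmetric] by linarith
qed

lemma quad_int:
  fixes x :: "'a::euclidean_space" and h :: "'a \<Rightarrow> real"
  assumes s: "0 < s" and hm[measurable]: "h \<in> borel_measurable borel"
    and hb: "\<And>y. \<bar>h y\<bar> \<le> a + b * (norm y)\<^sup>2" and b: "0 \<le> b"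
  shows "integrable lborel (\<lambda>y. gauss_dens s x y * h y)"
    and "\<bar>\<integral>y. gauss_dens s x y * h y \<partial>lborel\<bar> \<le> a + b * (2 * real DIM('a) * s + 2 * (norm x)\<^sup>2)"
proof -
  have ib: "integrable lborel (\<lambda>y. a * gauss_dens s x y + b * (gauss_dens s x y * (norm y)\<^sup>2))"
    using gauss_int_sq(1)[OF s, of x] gauss_int1[OF s, of x] by auto
  have le: "\<bar>gauss_dens s x y * h y\<bar> \<le> a * gauss_dens s x y + b * (gauss_dens s x y * (norm y)\<^sup>2)" for y
  proof -
    have "\<bar>gauss_dens s x y * h y\<bar> = gauss_dens s x y * \<bar>h y\<bar>" by (simp add: abs_mult)
    also have "\<dots> \<le> gauss_dens s x y * (a + b * (norm y)\<^sup>2)" by (rule mult_left_mono[OF hb]) simp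
    finally show ?thesis by (simp add: algebra_simps)
  qed
  show i: "integrable lborel (\<lambda>y. gauss_dens s x y * h y)"
    by (rule Bochner_Integration.integrable_bound[OF ib]) (auto intro!: AE_I2 intro: order_trans[OF le])
  have "\<bar>\<integral>y. gauss_dens s x y * h y \<partial>lborel\<bar> \<le> (\<integral>y. a * gauss_dens s x y + b * (gauss_dens s x y * (norm y)\<^sup>2) \<partial>lborel)"
    by (rule integral_abs_bound_integral[OF i ib le])
  also have "\<dots> = a + b * (\<integral>y. gauss_dens s x y * (norm y)\<^sup>2 \<partial>lborel)"
    using gauss_int_sq(1)[OF s, of x] gauss_int1[OF s, of x] s by simp
  also have "\<dots> \<le> a + b * (2 * real DIM('a) * s + 2 * (norm x)\<^sup>2)"
    using gauss_int_sq(2)[OF s, of x] b by (simp add: mult_left_mono)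
  finally show "\<bar>\<integral>y. gauss_dens s x y * h y \<partial>lborel\<bar> \<le> a + b * (2 * real DIM('a) * s + 2 * (norm x)\<^sup>2)" .
qed

definition LL :: "real \<Rightarrow> 'a::euclidean_space measure \<Rightarrow> 'a \<Rightarrow> real" where
  "LL s Q x = (\<integral>y. gauss_dens s x y * ln (out_dens s Q y) \<partial>lborel)"

definition cA :: "real \<Rightarrow> real \<Rightarrow> 'a::euclidean_space itself \<Rightarrow> real" where
  "cA s R _ = \<bar>ln (gauss_dens s (0::'a) 0)\<bar> + R\<^sup>2 / s"

lemma ln_out_bound':
  assumes Q: "input_dist R Q" and s: "0 < s"
  shows "\<bar>ln (out_dens s Q (y::'a::euclidean_space))\<bar> \<le> cA s R TYPE('a) + (1 / s) * (norm y)\<^sup>2"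
  using ln_out_dens_bound[OF Q s, of y] by (simp add: cA_def)

lemma LL_int:
  assumes Q: "input_dist R Q" and s: "0 < s"
  shows "integrable lborel (\<lambda>y. gauss_dens s (x::'a::euclidean_space) y * ln (out_dens s Q y))"
    and "\<bar>LL s Q x\<bar> \<le> cA s R TYPE('a) + (1 / s) * (2 * real DIM('a) * s + 2 * (norm x)\<^sup>2)"
  using quad_int[OF s _ ln_out_bound'[OF Q s], of x] out_dens_meas[OF Q] s
  by (auto simp: LL_def)

lemma ln_gauss: "0 < s \<Longrightarrow> ln (gauss_dens s x y) = ln (gauss_dens s (0::'a) 0) - (norm (y - x))\<^sup>2 / (2 * s)"
  for x y :: "'a::euclidean_space"
  using gauss_k_pos[of s, where 'a='a] by (subst gauss_eq_k) (simp add: ln_mult)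

lemma rel_ent_formula:
  assumes Q: "input_dist R Q" and s: "0 < s"
  shows "rel_ent (gauss_dens s (x::'a::euclidean_space)) (out_dens s Q)
       = ln (gauss_dens s (0::'a) 0) - real DIM('a) / 2 - LL s Q x"
proof -
  define k where "k = ln (gauss_dens s (0::'a) 0)"
  have eq: "gauss_dens s x y * ln (gauss_dens s x y / out_dens s Q y)
      = k * gauss_dens s x y - (1 / (2 * s)) * (gauss_dens s x y * (norm (y - x))\<^sup>2)
        - gauss_dens s x y * ln (out_dens s Q y)" for y
  proof -
    have "ln (gauss_dens s x y / out_dens s Q y) = k - (norm (y - x))\<^sup>2 / (2 * s) - ln (out_dens s Q y)"
      using s out_dens_pos[OF Q s, of y] gauss_pos[OF s, of x y] by (simp add: ln_div ln_gauss[OF s, of x y] k_def)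
    then show ?thesis by (simp add: right_diff_distrib mult.commute mult.left_commute)
  qed
  have i1: "integrable lborel (\<lambda>y. k * gauss_dens s x y - (1 / (2 * s)) * (gauss_dens s x y * (norm (y - x))\<^sup>2))"
    using gauss_int1[OF s, of x] gauss_int2[OF s, of x] by auto
  have "rel_ent (gauss_dens s x) (out_dens s Q)
     = (\<integral>y. (k * gauss_dens s x y - (1 / (2 * s)) * (gauss_dens s x y * (norm (y - x))\<^sup>2))
        - gauss_dens s x y * ln (out_dens s Q y) \<partial>lborel)"
    unfolding rel_ent_def eq ..
  also have "\<dots> = (\<integral>y. k * gauss_dens s x y - (1 / (2 * s)) * (gauss_dens s x y * (norm (y - x))\<^sup>2) \<partial>lborel) - LL s Q x"
    unfolding LL_def by (rule Bochner_Integration.integral_diff[OF i1 LL_int(1)[OF Q s]])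
  also have "(\<integral>y. k * gauss_dens s x y - (1 / (2 * s)) * (gauss_dens s x y * (norm (y - x))\<^sup>2) \<partial>lborel)
      = k - real DIM('a) / 2"
    using gauss_int1[OF s, of x] gauss_int2[OF s, of x] s by (simp add: gauss_integral2)
  finally show ?thesis by (simp add: k_def)
qed

lemma LL_meas[measurable]:
  assumes Q: "input_dist R Q"
  shows "LL s Q \<in> borel_measurable (borel :: 'a::euclidean_space measure)"
proof -
  have "(\<lambda>p::'a\<times>'a. gauss_dens s (fst p) (snd p) * ln (out_dens s Q (snd p))) \<in> borel_measurable (borel \<Otimes>\<^sub>M lborel)"
    using out_dens_meas[OF Q] by measurable
  then have "(\<lambda>x. \<integral>y. gauss_dens s x y * ln (out_dens s Q y) \<partial>lborel) \<in> borel_measurable (borel :: 'a measure)"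
    by (intro lborel.borel_measurable_lebesgue_integral) (simp add: case_prod_beta)
  then show ?thesis by (simp add: LL_def[abs_def])
qed

definition GL :: "real \<Rightarrow> ('a::euclidean_space \<Rightarrow> real) \<Rightarrow> 'a \<Rightarrow> real" where
  "GL s h x = (\<integral>y. gauss_dens s x y * h y \<partial>lborel)"

lemma GL_meas[measurable]:
  assumes [measurable]: "h \<in> borel_measurable borel"
  shows "GL s h \<in> borel_measurable (borel :: 'a::euclidean_space measure)"
proof -
  have "(\<lambda>p::'a\<times>'a. gauss_dens s (fst p) (snd p) * h (snd p)) \<in> borel_measurable (borel \<Otimes>\<^sub>M lborel)"
    by measurable
  then have "(\<lambda>x. \<integral>y. gauss_dens s x y * h y \<partial>lborel) \<in> borel_measurable (borel :: 'a measure)"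
    by (intro lborel.borel_measurable_lebesgue_integral) (simp add: case_prod_beta)
  then show ?thesis by (simp add: GL_def[abs_def])
qed

lemma fub:
  fixes M :: "'a::euclidean_space measure" and h :: "'a \<Rightarrow> real"
  assumes fm: "finite_measure M" and sM: "sets M = sets borel" and s: "0 < s"
    and hm[measurable]: "h \<in> borel_measurable borel"
    and hb: "\<And>y. \<bar>h y\<bar> \<le> a + b * (norm y)\<^sup>2" and b: "0 \<le> b"
    and iM: "integrable M (\<lambda>x. (norm x)\<^sup>2)"
  shows "integrable lborel (\<lambda>y. (\<integral>x. gauss_dens s x y \<partial>M) * h y)"
    and "(\<integral>x. GL s h x \<partial>M) = (\<integral>y. (\<integral>x. gauss_dens s x y \<partial>M) * h y \<partial>lborel)"
proof -
  interpret finite_measure M by (rule fm)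
  interpret pair_sigma_finite M lborel ..
  have a: "0 \<le> a" using hb[of 0] by simp
  have e: "sets (M \<Otimes>\<^sub>M lborel) = sets (borel \<Otimes>\<^sub>M (borel :: 'a measure))"
    using sM by (intro sets_pair_measure_cong) auto
  have m0: "(\<lambda>p::'a\<times>'a. gauss_dens s (fst p) (snd p) * h (snd p)) \<in> borel_measurable (borel \<Otimes>\<^sub>M borel)"
    by measurable
  have m: "(\<lambda>p::'a\<times>'a. gauss_dens s (fst p) (snd p) * h (snd p)) \<in> borel_measurable (M \<Otimes>\<^sub>M lborel)"
    using m0 by (subst measurable_cong_sets[OF e refl])
  have hb': "\<And>y. \<bar>\<bar>h y\<bar>\<bar> \<le> a + b * (norm y)\<^sup>2" using hb by simp
  have integ: "integrable (M \<Otimes>\<^sub>M lborel) (\<lambda>p::'a\<times>'a. gauss_dens s (fst p) (snd p) * h (snd p))"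
  proof (rule Fubini_integrable[OF m])
    have im: "(\<lambda>x. \<integral>y. norm (gauss_dens s x y * h y) \<partial>lborel) \<in> borel_measurable M"
    proof -
      have "(\<lambda>x. GL s (\<lambda>y. \<bar>h y\<bar>) x) \<in> borel_measurable M"
        by (rule meas_Q[OF sM]) measurable
      then show ?thesis by (simp add: GL_def abs_mult)
    qed
    have ib: "integrable M (\<lambda>x. a + b * (2 * real DIM('a) * s + 2 * (norm x)\<^sup>2))"
      using iM by auto
    show "integrable M (\<lambda>x. \<integral>y. norm (gauss_dens s (fst (x, y)) (snd (x, y)) * h (snd (x, y))) \<partial>lborel)"
    proof (rule Bochner_Integration.integrable_bound[OF ib])
      show "(\<lambda>x. \<integral>y. norm (gauss_dens s (fst (x, y)) (snd (x, y)) * h (snd (x, y))) \<partial>lborel) \<in> borel_measurable M"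
        using im by simp
      show "AE x in M. norm (\<integral>y. norm (gauss_dens s (fst (x, y)) (snd (x, y)) * h (snd (x, y))) \<partial>lborel)
              \<le> norm (a + b * (2 * real DIM('a) * s + 2 * (norm x)\<^sup>2))"
      proof (rule AE_I2)
        fix x
        have "\<bar>\<integral>y. gauss_dens s x y * \<bar>h y\<bar> \<partial>lborel\<bar> \<le> a + b * (2 * real DIM('a) * s + 2 * (norm x)\<^sup>2)"
          by (rule quad_int(2)[OF s _ hb' b]) measurable
        then show "norm (\<integral>y. norm (gauss_dens s (fst (x, y)) (snd (x, y)) * h (snd (x, y))) \<partial>lborel)
              \<le> norm (a + b * (2 * real DIM('a) * s + 2 * (norm x)\<^sup>2))"
          using a b s by (simp add: abs_mult)
      qed
    qed
    show "AE x in M. integrable lborel (\<lambda>y. gauss_dens s (fst (x, y)) (snd (x, y)) * h (snd (x, y)))"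
      using quad_int(1)[OF s hm hb b] by simp
  qed
  have integ': "integrable (M \<Otimes>\<^sub>M lborel) (case_prod (\<lambda>x y. gauss_dens s x y * h y))"
    unfolding case_prod_beta' using integ .
  have i2: "integrable lborel (\<lambda>y. \<integral>x. gauss_dens s x y * h y \<partial>M)"
    by (rule integrable_snd[OF integ'])
  show "integrable lborel (\<lambda>y. (\<integral>x. gauss_dens s x y \<partial>M) * h y)"
    using i2 by simp
  have "(\<integral>y. (\<integral>x. gauss_dens s x y * h y \<partial>M) \<partial>lborel) = (\<integral>x. (\<integral>y. gauss_dens s x y * h y \<partial>lborel) \<partial>M)"
    by (rule Fubini_integral[OF integ'])
  then show "(\<integral>x. GL s h x \<partial>M) = (\<integral>y. (\<integral>x. gauss_dens s x y \<partial>M) * h y \<partial>lborel)"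
    by (simp add: GL_def)
qed

lemma iQ_norm:
  assumes Q: "input_dist R Q"
  shows "integrable Q (\<lambda>x::'a::euclidean_space. (norm x)\<^sup>2)"
proof -
  interpret prob_space Q using input_distD[OF Q] by simp
  show ?thesis
  proof (rule integrable_const_bound[where B="R\<^sup>2"])
    show "AE x in Q. norm ((norm x)\<^sup>2) \<le> R\<^sup>2"
      using input_distD(4)[OF Q] by eventually_elim (simp add: power_mono)
    show "(\<lambda>x::'a. (norm x)\<^sup>2) \<in> borel_measurable Q"
      by (rule meas_Q[OF input_distD(2)[OF Q]]) measurable
  qed
qed

lemma LL_GL: "LL s Q = GL s (\<lambda>y. ln (out_dens s Q y))"
  by (simp add: LL_def GL_def fun_eq_iff)

lemma fubQ:
  fixes h :: "'a::euclidean_space \<Rightarrow> real"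
  assumes Q: "input_dist R Q" and s: "0 < s"
    and hm[measurable]: "h \<in> borel_measurable borel"
    and hb: "\<And>y. \<bar>h y\<bar> \<le> a + b * (norm y)\<^sup>2" and b: "0 \<le> b"
  shows "integrable lborel (\<lambda>y. out_dens s Q y * h y)"
    and "(\<integral>x. GL s h x \<partial>Q) = (\<integral>y. out_dens s Q y * h y \<partial>lborel)"
proof -
  have fm: "finite_measure Q" using input_distD(1)[OF Q] by (simp add: prob_space_def)
  note f = fub[OF fm input_distD(2)[OF Q] s hm hb b iQ_norm[OF Q]]
  show "integrable lborel (\<lambda>y. out_dens s Q y * h y)"
    using f(1) by (simp add: out_dens_def[abs_def])
  show "(\<integral>x. GL s h x \<partial>Q) = (\<integral>y. out_dens s Q y * h y \<partial>lborel)"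
    using f(2) by (simp add: out_dens_def[abs_def])
qed

lemma GL_bound:
  fixes h :: "'a::euclidean_space \<Rightarrow> real"
  assumes s: "0 < s" and hm[measurable]: "h \<in> borel_measurable borel"
    and hb: "\<And>y. \<bar>h y\<bar> \<le> a + b * (norm y)\<^sup>2" and b: "0 \<le> b"
  shows "\<bar>GL s h x\<bar> \<le> (a + 2 * b * real DIM('a) * s) + (2 * b) * (norm x)\<^sup>2"
  using quad_int(2)[OF s hm hb b, of x] by (simp add: GL_def algebra_simps)

lemma LL_Q_int:
  assumes Q: "input_dist R Q" and s: "0 < s"
  shows "integrable Q (LL s Q)"
proof -
  interpret prob_space Q using input_distD[OF Q] by simp
  show ?thesis
  proof (rule integrable_const_bound[where B="cA s R TYPE('a) + (1 / s) * (2 * real DIM('a) * s + 2 * R\<^sup>2)"])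
    show "AE x in Q. norm (LL s Q x) \<le> cA s R TYPE('a) + (1 / s) * (2 * real DIM('a) * s + 2 * R\<^sup>2)"
      using input_distD(4)[OF Q]
    proof eventually_elim
      case (elim x)
      have "(norm x)\<^sup>2 \<le> R\<^sup>2" using elim by (simp add: power_mono)
      then have "(1 / s) * (2 * real DIM('a) * s + 2 * (norm x)\<^sup>2) \<le> (1 / s) * (2 * real DIM('a) * s + 2 * R\<^sup>2)"
        using s by (intro mult_left_mono) auto
      then show ?case using LL_int(2)[OF Q s, of x] by simp
    qed
    show "LL s Q \<in> borel_measurable Q"
      by (rule meas_Q[OF input_distD(2)[OF Q] LL_meas[OF Q]])
  qed
qed

lemma mi_formula:
  fixes Q :: "'a::euclidean_space measure"
  assumes Q: "input_dist R Q" and s: "0 < s"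
  shows "mutual_info s Q = ln (gauss_dens s (0::'a::euclidean_space) 0) - real DIM('a) / 2 - (\<integral>x. LL s Q x \<partial>Q)"
proof -
  interpret prob_space Q using input_distD[OF Q] by simp
  have "mutual_info s Q = (\<integral>x. ln (gauss_dens s (0::'a) 0) - real DIM('a) / 2 - LL s Q x \<partial>Q)"
    unfolding mutual_info_def by (simp add: rel_ent_formula[OF Q s])
  also have "\<dots> = ln (gauss_dens s (0::'a) 0) - real DIM('a) / 2 - (\<integral>x. LL s Q x \<partial>Q)"
    using LL_Q_int[OF Q s] by (simp add: prob_space)
  finally show ?thesis .
qed

lemma Xi_formula:
  assumes P: "input_dist R P" and s1: "0 < s1" and s2: "0 < s2"
  shows "Xi s1 s2 P x = ln (gauss_dens s1 (0::'a::euclidean_space) 0) - ln (gauss_dens s2 (0::'a) 0) - LL s1 P x + LL s2 P (x::'a)"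
  unfolding Xi_def rel_ent_formula[OF P s1] rel_ent_formula[OF P s2] by simp

lemma lnk_diff:
  assumes s1: "0 < s1" and s2: "0 < s2"
  shows "ln (gauss_dens s1 (0::'a::euclidean_space) 0) - ln (gauss_dens s2 (0::'a) 0) = real DIM('a) * ln (sqrt s2 / sqrt s1)"
proof -
  have e1: "ln (gauss_dens s1 (0::'a) 0) = - real DIM('a) / 2 * (ln (2 * pi) + ln s1)"
    using s1 by (simp add: gauss_dens_def ln_mult)
  have e2: "ln (gauss_dens s2 (0::'a) 0) = - real DIM('a) / 2 * (ln (2 * pi) + ln s2)"
    using s2 by (simp add: gauss_dens_def ln_mult)
  have e3: "ln (sqrt s2 / sqrt s1) = ln s2 / 2 - ln s1 / 2"
    using s1 s2 by (simp add: ln_div ln_sqrt)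
  show ?thesis unfolding e1 e2 e3 by (simp add: field_simps)
qed

lemma gfun_eq:
  fixes P :: "'a::euclidean_space measure"
  assumes P: "input_dist R P" and s1: "0 < s1" and s12: "s1 < s2"
  shows "gfun s1 s2 P y = GL (s2 - s1) (\<lambda>w. ln (out_dens s2 P w)) y - ln (out_dens s1 P y) + real DIM('a) * ln (sqrt s2 / sqrt s1)"
proof -
  define d where "d = s2 - s1"
  have d: "0 < d" using s12 by (simp add: d_def)
  have s2: "0 < s2" using s1 s12 by simp
  define \<phi> where "\<phi> w = gauss_dens d y w * ln (out_dens s2 P w)" for w
  have \<phi>m[measurable]: "\<phi> \<in> borel_measurable borel" unfolding \<phi>_def[abs_def] using out_dens_meas[OF P] by measurable
  have \<phi>i: "integrable lborel \<phi>"
    unfolding \<phi>_def using LL_int(1)[OF P s2, of y] quad_int(1)[OF d _ ln_out_bound'[OF P s2], of y] out_dens_meas[OF P] s2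
    by simp
  have sh: "\<phi> (y + z) = gauss_dens d 0 z * ln (out_dens s2 P (y + z))" for z
    unfolding \<phi>_def by (subst gauss_shift) simp
  have i1: "integrable lborel (\<lambda>z. gauss_dens d 0 z * ln (out_dens s2 P (y + z)))"
    using lborel_int_shift(2)[OF \<phi>m, of y] \<phi>i unfolding sh by simp
  have int1: "(\<integral>z. gauss_dens d 0 z * ln (out_dens s2 P (y + z)) \<partial>lborel) = GL d (\<lambda>w. ln (out_dens s2 P w)) y"
    using lborel_int_shift(1)[OF \<phi>m, of y] unfolding sh by (simp add: GL_def \<phi>_def)
  have eq: "gauss_dens d 0 z * ln (out_dens s2 P (y + z) / out_dens s1 P y)
      = gauss_dens d 0 z * ln (out_dens s2 P (y + z)) - ln (out_dens s1 P y) * gauss_dens d 0 z" for z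
    using out_dens_pos[OF P s1, of y] out_dens_pos[OF P s2, of "y + z"]
    by (simp add: ln_div right_diff_distrib)
  have "(\<integral>z. gauss_dens d 0 z * ln (out_dens s2 P (y + z) / out_dens s1 P y) \<partial>lborel)
     = (\<integral>z. gauss_dens d 0 z * ln (out_dens s2 P (y + z)) \<partial>lborel) - (\<integral>z. ln (out_dens s1 P y) * gauss_dens d 0 z \<partial>lborel)"
    unfolding eq by (subst Bochner_Integration.integral_diff) (use i1 d in auto)
  also have "(\<integral>z. gauss_dens d 0 z * ln (out_dens s2 P (y + z)) \<partial>lborel) - (\<integral>z. ln (out_dens s1 P y) * gauss_dens d 0 z \<partial>lborel) = GL d (\<lambda>w. ln (out_dens s2 P w)) y - ln (out_dens s1 P y)"
    unfolding int1 using d by simp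
  finally show ?thesis unfolding gfun_def d_def by simp
qed

lemma part1:
  fixes P :: "'a::euclidean_space measure"
  assumes P: "input_dist R P" and s1: "0 < s1" and s12: "s1 < s2"
  shows "Xi s1 s2 P x = (\<integral>y. gauss_dens s1 x y * gfun s1 s2 P y \<partial>lborel)"
proof -
  define d where "d = s2 - s1"
  have d: "0 < d" using s12 by (simp add: d_def)
  have s2: "0 < s2" using s1 s12 by simp
  define G where "G = GL d (\<lambda>w. ln (out_dens s2 P w))"
  define c where "c = real DIM('a) * ln (sqrt s2 / sqrt s1)"
  have Gm[measurable]: "G \<in> borel_measurable borel" unfolding G_def using out_dens_meas[OF P] by measurable
  have Gb: "\<bar>G y\<bar> \<le> (cA s2 R TYPE('a) + 2 * (1 / s2) * real DIM('a) * d) + (2 * (1 / s2)) * (norm y)\<^sup>2" for y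
    unfolding G_def by (rule GL_bound[OF d _ ln_out_bound'[OF P s2]]) (use out_dens_meas[OF P] s2 in auto)
  have iG: "integrable lborel (\<lambda>y. gauss_dens s1 x y * G y)"
    by (rule quad_int(1)[OF s1 Gm Gb]) (use s2 in simp)
  have eq: "gauss_dens s1 x y * gfun s1 s2 P y
     = gauss_dens s1 x y * G y - gauss_dens s1 x y * ln (out_dens s1 P y) + c * gauss_dens s1 x y" for y
    unfolding gfun_eq[OF P s1 s12] G_def d_def c_def by (simp add: algebra_simps)
  have "(\<integral>y. gauss_dens s1 x y * gfun s1 s2 P y \<partial>lborel)
     = (\<integral>y. gauss_dens s1 x y * G y \<partial>lborel) - LL s1 P x + c"
    unfolding eq LL_def using iG LL_int(1)[OF P s1, of x] s1 by simp
  also have "(\<integral>y. gauss_dens s1 x y * G y \<partial>lborel) = LL s2 P x"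
  proof -
    define D where "D = density lborel (\<lambda>y. ennreal (gauss_dens s1 x y))"
    have sD: "sets D = sets borel" by (simp add: D_def)
    have fD: "finite_measure D"
    proof (rule finite_measureI)
      have "emeasure D (space D) = (\<integral>\<^sup>+y. ennreal (gauss_dens s1 x y) \<partial>lborel)"
        by (simp add: D_def emeasure_density)
      also have "\<dots> = 1" using s1 by (subst nn_integral_eq_integral) auto
      finally show "emeasure D (space D) \<noteq> \<infinity>" by simp
    qed
    have iD: "integrable D (\<lambda>y. (norm y)\<^sup>2)"
      unfolding D_def by (subst integrable_density) (use gauss_int_sq(1)[OF s1, of x] in auto)
    have "(\<integral>y. gauss_dens s1 x y * G y \<partial>lborel) = (\<integral>y. G y \<partial>D)"
      unfolding D_def by (subst integral_density) auto
    also have "\<dots> = (\<integral>w. (\<integral>y. gauss_dens d y w \<partial>D) * ln (out_dens s2 P w) \<partial>lborel)"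
      unfolding G_def
      by (rule fub(2)[OF fD sD d _ ln_out_bound'[OF P s2]]) (use out_dens_meas[OF P] s2 iD in auto)
    also have "\<dots> = (\<integral>w. gauss_dens s2 x w * ln (out_dens s2 P w) \<partial>lborel)"
    proof (rule Bochner_Integration.integral_cong[OF refl])
      fix w
      have "(\<integral>y. gauss_dens d y w \<partial>D) = (\<integral>y. gauss_dens s1 x y * gauss_dens d y w \<partial>lborel)"
        unfolding D_def by (subst integral_density) auto
      also have "\<dots> = gauss_dens s2 x w" using gauss_conv(1)[OF s1 d, of x w] by (simp add: d_def)
      finally show "(\<integral>y. gauss_dens d y w \<partial>D) * ln (out_dens s2 P w) = gauss_dens s2 x w * ln (out_dens s2 P w)"
        by simp
    qed
    finally show ?thesis by (simp add: LL_def)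
  qed
  finally show ?thesis
    unfolding Xi_formula[OF P s1 s2] c_def lnk_diff[OF s1 s2, symmetric] by simp
qed

definition mixm :: "real \<Rightarrow> 'a::euclidean_space \<Rightarrow> 'a measure \<Rightarrow> 'a measure" where
  "mixm t x0 P = Giry_Monad.bind (measure_pmf (bernoulli_pmf t)) (\<lambda>b. if b then return borel x0 else P)"

context
  fixes t :: real and x0 :: "'a::euclidean_space" and P :: "'a measure"
  assumes t: "0 \<le> t" "t \<le> 1" and P: "prob_space P" "sets P = sets borel"
begin

lemma mix_kernel: "(\<lambda>b. if b then return borel x0 else P) \<in> measurable (measure_pmf (bernoulli_pmf t)) (subprob_algebra borel)"
proof -
  have "return borel x0 \<in> space (subprob_algebra borel)"
    by (simp add: space_subprob_algebra subprob_space_return)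
  moreover have "P \<in> space (subprob_algebra borel)"
    using P by (simp add: space_subprob_algebra prob_space_imp_subprob_space)
  ultimately show ?thesis by auto
qed

lemma sets_mix: "sets (mixm t x0 P) = sets borel"
  unfolding mixm_def using P by (subst sets_bind) auto

lemma space_mix: "space (mixm t x0 P) = UNIV"
  using sets_eq_imp_space_eq[OF sets_mix] by simp

lemma nn_mix:
  assumes f[measurable]: "f \<in> borel_measurable borel"
  shows "(\<integral>\<^sup>+x. f x \<partial>mixm t x0 P) = ennreal t * f x0 + ennreal (1 - t) * (\<integral>\<^sup>+x. f x \<partial>P)"
proof -
  have "(\<integral>\<^sup>+x. f x \<partial>mixm t x0 P) = (\<integral>\<^sup>+b. (\<integral>\<^sup>+x. f x \<partial>(if b then return borel x0 else P)) \<partial>measure_pmf (bernoulli_pmf t))"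
    unfolding mixm_def by (rule nn_integral_bind[OF f mix_kernel])
  also have "\<dots> = (\<integral>\<^sup>+x. f x \<partial>return borel x0) * ennreal t + (\<integral>\<^sup>+x. f x \<partial>P) * ennreal (1 - t)"
    using t by (subst nn_integral_bernoulli_pmf) auto
  also have "(\<integral>\<^sup>+x. f x \<partial>return borel x0) = f x0"
    by (rule nn_integral_return) auto
  finally show ?thesis by (simp add: ac_simps)
qed

lemma prob_mix: "prob_space (mixm t x0 P)"
proof (rule prob_spaceI)
  have "emeasure (mixm t x0 P) (space (mixm t x0 P)) = (\<integral>\<^sup>+x. 1 \<partial>mixm t x0 P)"
    by simp
  also have "\<dots> = ennreal t + ennreal (1 - t) * emeasure P (space P)"
    by (subst nn_mix) auto
  also have "\<dots> = 1" using t prob_space.emeasure_space_1[OF P(1)]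
    by (simp add: ennreal_plus[symmetric] del: ennreal_plus)
  finally show "emeasure (mixm t x0 P) (space (mixm t x0 P)) = 1" .
qed

lemma emeasure_mix:
  assumes A: "A \<in> sets borel"
  shows "emeasure (mixm t x0 P) A = ennreal t * indicator A x0 + ennreal (1 - t) * emeasure P A"
proof -
  have "emeasure (mixm t x0 P) A = (\<integral>\<^sup>+x. indicator A x \<partial>mixm t x0 P)"
    using A sets_mix by (simp)
  also have "\<dots> = ennreal t * indicator A x0 + ennreal (1 - t) * (\<integral>\<^sup>+x. indicator A x \<partial>P)"
    using A by (subst nn_mix) auto
  also have "(\<integral>\<^sup>+x. indicator A x \<partial>P) = emeasure P A"
    using A P by simp
  finally show ?thesis .
qed

lemma int_mix_nonneg:
  assumes f[measurable]: "f \<in> borel_measurable borel" and nn: "\<And>x. 0 \<le> f x"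
    and i: "integrable P f"
  shows "integrable (mixm t x0 P) f" "(\<integral>x. f x \<partial>mixm t x0 P) = t * f x0 + (1 - t) * (\<integral>x. f x \<partial>P)"
proof -
  have fP: "f \<in> borel_measurable P" by (rule meas_Q[OF P(2) f])
  have fM: "f \<in> borel_measurable (mixm t x0 P)" by (rule meas_Q[OF sets_mix f])
  have nP: "(\<integral>\<^sup>+x. ennreal (f x) \<partial>P) = ennreal (\<integral>x. f x \<partial>P)"
    using i nn by (subst nn_integral_eq_integral) auto
  have nM: "(\<integral>\<^sup>+x. ennreal (f x) \<partial>mixm t x0 P) = ennreal (t * f x0 + (1 - t) * (\<integral>x. f x \<partial>P))"
    using t nn Bochner_Integration.integral_nonneg[where M=P and f=f] by (simp add: nn_mix nP ennreal_mult ennreal_plus)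
  have hb: "has_bochner_integral (mixm t x0 P) f (t * f x0 + (1 - t) * (\<integral>x. f x \<partial>P))"
    by (rule has_bochner_integral_nn_integral[OF fM]) (use t nn Bochner_Integration.integral_nonneg[where M=P and f=f] nM in auto)
  show "integrable (mixm t x0 P) f" using hb by (rule integrable.intros)
  show "(\<integral>x. f x \<partial>mixm t x0 P) = t * f x0 + (1 - t) * (\<integral>x. f x \<partial>P)"
    using hb by (rule has_bochner_integral_integral_eq)
qed

lemma int_mix:
  assumes f[measurable]: "f \<in> borel_measurable borel" and i: "integrable P f"
  shows "integrable (mixm t x0 P) f" "(\<integral>x. f x \<partial>mixm t x0 P) = t * f x0 + (1 - t) * (\<integral>x. f x \<partial>P)"
proof -
  define fp where "fp x = max (f x) 0" for x
  define fn where "fn x = max (- f x) 0" for x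
  have fpm[measurable]: "fp \<in> borel_measurable borel" and fnm[measurable]: "fn \<in> borel_measurable borel"
    unfolding fp_def[abs_def] fn_def[abs_def] by measurable
  have ip: "integrable P fp" unfolding fp_def using i by (intro integrable_max) auto
  have inn: "integrable P fn" unfolding fn_def using i by (intro integrable_max) auto
  have fe: "f = (\<lambda>x. fp x - fn x)" by (auto simp: fp_def fn_def fun_eq_iff)
  note p = int_mix_nonneg[of fp] and n = int_mix_nonneg[of fn]
  have pp: "\<And>x. 0 \<le> fp x" "\<And>x. 0 \<le> fn x" by (auto simp: fp_def fn_def)
  show "integrable (mixm t x0 P) f"
    unfolding fe using p(1)[OF fpm pp(1) ip] n(1)[OF fnm pp(2) inn] by auto
  have "(\<integral>x. f x \<partial>mixm t x0 P) = (\<integral>x. fp x \<partial>mixm t x0 P) - (\<integral>x. fn x \<partial>mixm t x0 P)"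
    unfolding fe using p(1)[OF fpm pp(1) ip] n(1)[OF fnm pp(2) inn] by (rule Bochner_Integration.integral_diff)
  also have "\<dots> = t * (fp x0 - fn x0) + (1 - t) * ((\<integral>x. fp x \<partial>P) - (\<integral>x. fn x \<partial>P))"
    unfolding p(2)[OF fpm pp(1) ip] n(2)[OF fnm pp(2) inn] by (simp add: algebra_simps)
  also have "(\<integral>x. fp x \<partial>P) - (\<integral>x. fn x \<partial>P) = (\<integral>x. f x \<partial>P)"
    unfolding fe using ip inn by (rule Bochner_Integration.integral_diff[symmetric])
  finally show "(\<integral>x. f x \<partial>mixm t x0 P) = t * f x0 + (1 - t) * (\<integral>x. f x \<partial>P)"
    by (simp add: fe)
qed

end


lemma mix_input:
  assumes P: "input_dist R P" and x0: "norm x0 \<le> R" and t: "0 \<le> t" "t \<le> 1"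
  shows "input_dist R (mixm t x0 P)"
proof -
  note Pd = input_distD[OF P]
  have "emeasure (mixm t x0 P) (- cball 0 R) = ennreal t * indicator (- cball 0 R) x0 + ennreal (1 - t) * emeasure P (- cball 0 R)"
    by (rule emeasure_mix[OF t Pd(1,2)]) auto
  also have "\<dots> = 0" using x0 P by (simp add: input_dist_def)
  finally show ?thesis
    unfolding input_dist_def using prob_mix[OF t Pd(1,2)] sets_mix[OF t Pd(1,2)] by simp
qed

lemma out_dens_mix:
  assumes P: "input_dist R P" and s: "0 < s" and t: "0 \<le> t" "t \<le> 1"
  shows "out_dens s (mixm t x0 P) y = t * gauss_dens s x0 y + (1 - t) * out_dens s P (y::'a::euclidean_space)"
  unfolding out_dens_def
  by (rule int_mix(2)[OF t input_distD(1,2)[OF P] _ integrable_gauss_Q[OF P s]]) measurable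

lemma GL_Q_int:
  fixes h :: "'a::euclidean_space \<Rightarrow> real"
  assumes Q: "input_dist R Q" and s: "0 < s" and hm[measurable]: "h \<in> borel_measurable borel"
    and hb: "\<And>y. \<bar>h y\<bar> \<le> a + b * (norm y)\<^sup>2" and b: "0 \<le> b"
  shows "integrable Q (GL s h)"
proof -
  interpret prob_space Q using input_distD[OF Q] by simp
  show ?thesis
  proof (rule integrable_const_bound[where B="(a + 2 * b * real DIM('a) * s) + (2 * b) * R\<^sup>2"])
    show "AE x in Q. norm (GL s h x) \<le> (a + 2 * b * real DIM('a) * s) + (2 * b) * R\<^sup>2"
      using input_distD(4)[OF Q]
    proof eventually_elim
      case (elim x)
      have "(norm x)\<^sup>2 \<le> R\<^sup>2" using elim by (simp add: power_mono)
      then have "(2 * b) * (norm x)\<^sup>2 \<le> (2 * b) * R\<^sup>2" using b by (intro mult_left_mono) auto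
      then show ?case using GL_bound[OF s hm hb b, of x] by simp
    qed
    show "GL s h \<in> borel_measurable Q"
      by (rule meas_Q[OF input_distD(2)[OF Q]]) measurable
  qed
qed

lemma out_dens_int1:
  assumes Q: "input_dist R Q" and s: "0 < s"
  shows "integrable lborel (out_dens s Q)" "(\<integral>y. out_dens s Q (y::'a::euclidean_space) \<partial>lborel) = 1"
proof -
  interpret prob_space Q using input_distD[OF Q] by simp
  have GL1: "GL s (\<lambda>_. 1) x = 1" for x :: 'a using s by (simp add: GL_def)
  note f = fubQ[OF Q s, of "\<lambda>_. 1" 1 0]
  show "integrable lborel (out_dens s Q)" using f(1) by simp
  show "(\<integral>y. out_dens s Q (y::'a::euclidean_space) \<partial>lborel) = 1" using f(2) by (simp add: GL1 prob_space)
qed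

lemma sq_aux1:
  fixes p q Y :: real
  assumes "0 \<le> p" "0 \<le> q" "0 \<le> Y" "Y \<le> p + q"
  shows "Y\<^sup>2 \<le> 4 / 3 * p\<^sup>2 + 4 * q\<^sup>2"
proof -
  have "Y\<^sup>2 \<le> (p + q)\<^sup>2" using assms by (simp add: power_mono)
  moreover have "4 / 3 * p\<^sup>2 + 4 * q\<^sup>2 - (p + q)\<^sup>2 = (p - 3 * q)\<^sup>2 / 3"
    by (simp add: power2_eq_square field_simps)
  moreover have "0 \<le> (p - 3 * q)\<^sup>2 / 3" by simp
  ultimately show ?thesis by linarith
qed

lemma sq_aux2:
  fixes Y R :: real
  shows "(Y + R)\<^sup>2 \<le> 5 / 4 * Y\<^sup>2 + 5 * R\<^sup>2"
proof -
  have "5 / 4 * Y\<^sup>2 + 5 * R\<^sup>2 - (Y + R)\<^sup>2 = (Y - 4 * R)\<^sup>2 / 4"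
    by (simp add: power2_eq_square field_simps)
  moreover have "0 \<le> (Y - 4 * R)\<^sup>2 / 4" by simp
  ultimately show ?thesis by linarith
qed

lemma chi_bound_pt:
  fixes P :: "'a::euclidean_space measure"
  assumes P: "input_dist R P" and s: "0 < s" and x0: "norm x0 \<le> R"
  shows "(gauss_dens s x0 y)\<^sup>2 / out_dens s P y
     \<le> (gauss_dens s (0::'a) 0 * exp (11 * R\<^sup>2 / (2 * s)) / gauss_dens (4 * s) (0::'a) 0) * gauss_dens (4 * s) 0 y"
proof -
  define k where "k = gauss_dens s (0::'a) 0"
  define k4 where "k4 = gauss_dens (4 * s) (0::'a) 0"
  have k: "0 < k" and k4: "0 < k4" using s by (auto simp: k_def k4_def gauss_k_pos)
  define L where "L = k * exp (- (norm y + R)\<^sup>2 / (2 * s))"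
  have L: "0 < L" using k by (simp add: L_def)
  have fL: "L \<le> out_dens s P y" using out_dens_lower[OF P s, of y] by (simp add: L_def k_def)
  have g2: "(gauss_dens s x0 y)\<^sup>2 = k * k * exp (- (norm (y - x0))\<^sup>2 / s)"
  proof -
    define a where "a = - (norm (y - x0))\<^sup>2 / (2 * s)"
    have "gauss_dens s x0 y = k * exp a" unfolding gauss_eq_k[of s x0 y] k_def a_def ..
    then have "(gauss_dens s x0 y)\<^sup>2 = k * k * (exp a * exp a)"
      by (simp add: power2_eq_square)
    moreover have "exp a * exp a = exp (- (norm (y - x0))\<^sup>2 / s)"
      by (simp only: mult_exp_exp) (use s in \<open>simp add: a_def field_simps\<close>)
    ultimately show ?thesis by simp
  qed
  have "(gauss_dens s x0 y)\<^sup>2 / out_dens s P y \<le> (gauss_dens s x0 y)\<^sup>2 / L"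
    using L fL by (intro divide_left_mono) auto
  also have "\<dots> = k * exp (- (norm (y - x0))\<^sup>2 / s + (norm y + R)\<^sup>2 / (2 * s))"
  proof -
    have "exp (- (norm (y - x0))\<^sup>2 / s + (norm y + R)\<^sup>2 / (2 * s))
        = exp (- (norm (y - x0))\<^sup>2 / s - (- (norm y + R)\<^sup>2 / (2 * s)))" by simp
    also have "\<dots> = exp (- (norm (y - x0))\<^sup>2 / s) / exp (- (norm y + R)\<^sup>2 / (2 * s))"
      by (rule exp_diff)
    finally show ?thesis unfolding g2 L_def using k by simp
  qed
  also have "\<dots> \<le> k * exp (11 * R\<^sup>2 / (2 * s) + - (norm y)\<^sup>2 / (2 * (4 * s)))"
  proof -
    have R0: "0 \<le> R" using x0 norm_ge_zero order_trans by blast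
    have a1: "(norm y)\<^sup>2 \<le> 4 / 3 * (norm (y - x0))\<^sup>2 + 4 * (norm x0)\<^sup>2"
      by (rule sq_aux1) (auto, metis norm_triangle_ineq diff_add_cancel)
    have "(norm x0)\<^sup>2 \<le> R\<^sup>2" using x0 by (simp add: power_mono)
    with a1 have a1': "3 / 4 * (norm y)\<^sup>2 - 3 * R\<^sup>2 \<le> (norm (y - x0))\<^sup>2" by simp
    have a2: "(norm y + R)\<^sup>2 \<le> 5 / 4 * (norm y)\<^sup>2 + 5 * R\<^sup>2" by (rule sq_aux2)
    have "- (norm (y - x0))\<^sup>2 / s + (norm y + R)\<^sup>2 / (2 * s) = (- 2 * (norm (y - x0))\<^sup>2 + (norm y + R)\<^sup>2) / (2 * s)"
      using s by (simp add: field_simps)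
    also have "\<dots> \<le> (- (norm y)\<^sup>2 / 4 + 11 * R\<^sup>2) / (2 * s)"
      using a1' a2 s by (intro divide_right_mono) auto
    also have "\<dots> = 11 * R\<^sup>2 / (2 * s) + - (norm y)\<^sup>2 / (2 * (4 * s))"
      using s by (simp add: field_simps)
    finally show ?thesis using k by simp
  qed
  also have "\<dots> = (k * exp (11 * R\<^sup>2 / (2 * s)) / k4) * gauss_dens (4 * s) 0 y"
    unfolding gauss_eq_k[of "4 * s" 0 y] k4_def[symmetric] exp_add using k4 by (simp add: field_simps)
  finally show ?thesis by (simp add: k_def k4_def)
qed

lemma chi_int:
  fixes P :: "'a::euclidean_space measure"
  assumes P: "input_dist R P" and s: "0 < s" and x0: "norm x0 \<le> R"
  shows "integrable lborel (\<lambda>y. (gauss_dens s x0 y - out_dens s P y)\<^sup>2 / out_dens s P y)"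
proof -
  define K where "K = gauss_dens s (0::'a) 0 * exp (11 * R\<^sup>2 / (2 * s)) / gauss_dens (4 * s) (0::'a) 0"
  have ib: "integrable lborel (\<lambda>y. 2 * (K * gauss_dens (4 * s) 0 y) + 2 * out_dens s P y)"
    using out_dens_int1(1)[OF P s] s by auto
  show ?thesis
  proof (rule Bochner_Integration.integrable_bound[OF ib])
    show "(\<lambda>y. (gauss_dens s x0 y - out_dens s P y)\<^sup>2 / out_dens s P y) \<in> borel_measurable lborel"
      using out_dens_meas[OF P] by measurable
    show "AE y in lborel. norm ((gauss_dens s x0 y - out_dens s P y)\<^sup>2 / out_dens s P y)
        \<le> norm (2 * (K * gauss_dens (4 * s) 0 y) + 2 * out_dens s P y)"
    proof (rule AE_I2)
      fix y
      define g where "g = gauss_dens s x0 y"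
      define f where "f = out_dens s P y"
      have f: "0 < f" using out_dens_pos[OF P s] by (simp add: f_def)
      have g: "0 \<le> g" by (simp add: g_def)
      have c: "g\<^sup>2 / f \<le> K * gauss_dens (4 * s) 0 y" using chi_bound_pt[OF P s x0, of y] by (simp add: K_def g_def f_def)
      have "(g - f)\<^sup>2 \<le> 2 * g\<^sup>2 + 2 * f\<^sup>2" 
      proof -
        have "2 * g\<^sup>2 + 2 * f\<^sup>2 - (g - f)\<^sup>2 = (g + f)\<^sup>2" by (simp add: power2_eq_square algebra_simps)
        moreover have "0 \<le> (g + f)\<^sup>2" by simp
        ultimately show ?thesis by linarith
      qed
      then have "(g - f)\<^sup>2 / f \<le> (2 * g\<^sup>2 + 2 * f\<^sup>2) / f" using f by (intro divide_right_mono) auto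
      also have "\<dots> = 2 * (g\<^sup>2 / f) + 2 * f" using f by (simp add: field_simps power2_eq_square)
      also have "\<dots> \<le> 2 * (K * gauss_dens (4 * s) 0 y) + 2 * f" using c by simp
      finally have "(g - f)\<^sup>2 / f \<le> 2 * (K * gauss_dens (4 * s) 0 y) + 2 * f" .
      moreover have "0 \<le> (g - f)\<^sup>2 / f" using f by simp
      ultimately show "norm ((gauss_dens s x0 y - out_dens s P y)\<^sup>2 / out_dens s P y)
        \<le> norm (2 * (K * gauss_dens (4 * s) 0 y) + 2 * out_dens s P y)"
        unfolding g_def[symmetric] f_def[symmetric] by simp
    qed
  qed
qed

definition En :: "real \<Rightarrow> 'a::euclidean_space measure \<Rightarrow> real" where
  "En s Q = (\<integral>y. out_dens s Q y * ln (out_dens s Q y) \<partial>lborel)"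

lemma En_fub:
  fixes Q :: "'a::euclidean_space measure"
  assumes Q: "input_dist R Q" and s: "0 < s"
  shows "(\<integral>x. LL s Q x \<partial>Q) = En s Q" "integrable lborel (\<lambda>y. out_dens s Q y * ln (out_dens s Q y))"
proof -
  note f = fubQ[OF Q s _ ln_out_bound'[OF Q s]]
  show "(\<integral>x. LL s Q x \<partial>Q) = En s Q"
    unfolding LL_GL En_def using f(2) out_dens_meas[OF Q] s by simp
  show "integrable lborel (\<lambda>y. out_dens s Q y * ln (out_dens s Q y))"
    using f(1) out_dens_meas[OF Q] s by simp
qed

lemma mi_En:
  fixes Q :: "'a::euclidean_space measure"
  assumes Q: "input_dist R Q" and s: "0 < s"
  shows "mutual_info s Q = ln (gauss_dens s (0::'a) 0) - real DIM('a) / 2 - En s Q"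
  using mi_formula[OF Q s] En_fub(1)[OF Q s] by simp

lemma F_En:
  fixes Q :: "'a::euclidean_space measure"
  assumes Q: "input_dist R Q" and s1: "0 < s1" and s2: "0 < s2"
  shows "mutual_info s1 Q - mutual_info s2 Q
     = ln (gauss_dens s1 (0::'a) 0) - ln (gauss_dens s2 (0::'a) 0) - En s1 Q + En s2 Q"
  using mi_En[OF Q s1] mi_En[OF Q s2] by simp

lemma En_mix:
  fixes P :: "'a::euclidean_space measure"
  assumes P: "input_dist R P" and s: "0 < s" and x0: "norm x0 \<le> R" and t: "0 \<le> t" "t \<le> 1"
  defines "Dv \<equiv> En s (mixm t x0 P) - (t * LL s P x0 + (1 - t) * En s P)"
  shows "0 \<le> Dv" "Dv \<le> t\<^sup>2 * (\<integral>y. (gauss_dens s x0 y - out_dens s P y)\<^sup>2 / out_dens s P y \<partial>lborel)"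
proof -
  define Pt where "Pt = mixm t x0 P"
  have Pt: "input_dist R Pt" unfolding Pt_def by (rule mix_input[OF P x0 t])
  define ft where "ft = out_dens s Pt"
  define f where "f = out_dens s P"
  define g where "g = gauss_dens s x0"
  have ftm[measurable]: "ft \<in> borel_measurable borel" unfolding ft_def by (rule out_dens_meas[OF Pt])
  have fm[measurable]: "f \<in> borel_measurable borel" unfolding f_def by (rule out_dens_meas[OF P])
  have gm[measurable]: "g \<in> borel_measurable borel" unfolding g_def by measurable
  have ft_eq: "ft y = t * g y + (1 - t) * f y" for y
    unfolding ft_def Pt_def g_def f_def by (rule out_dens_mix[OF P s t])
  have ftp: "0 < ft y" for y unfolding ft_def by (rule out_dens_pos[OF Pt s])
  have fp: "0 < f y" for y unfolding f_def by (rule out_dens_pos[OF P s])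
  note Pd = input_distD[OF P]
  have i1: "integrable lborel (\<lambda>y. ft y * ln (ft y))"
    unfolding ft_def by (rule En_fub(2)[OF Pt s])
  have i2: "integrable lborel (\<lambda>y. ft y * ln (f y))"
    using fubQ(1)[OF Pt s _ ln_out_bound'[OF P s]] s out_dens_meas[OF P] unfolding ft_def f_def by simp
  have cross: "(\<integral>y. ft y * ln (f y) \<partial>lborel) = t * LL s P x0 + (1 - t) * En s P"
  proof -
    have "(\<integral>y. ft y * ln (f y) \<partial>lborel) = (\<integral>x. GL s (\<lambda>y. ln (f y)) x \<partial>Pt)"
      using fubQ(2)[OF Pt s _ ln_out_bound'[OF P s]] s out_dens_meas[OF P] unfolding ft_def f_def by simp
    also have "\<dots> = t * GL s (\<lambda>y. ln (f y)) x0 + (1 - t) * (\<integral>x. GL s (\<lambda>y. ln (f y)) x \<partial>P)"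
      unfolding Pt_def
      by (rule int_mix(2)[OF t Pd(1,2)]) (use GL_Q_int[OF P s _ ln_out_bound'[OF P s]] s out_dens_meas[OF P] in \<open>auto simp: f_def\<close>)
    also have "\<dots> = t * LL s P x0 + (1 - t) * En s P"
      using En_fub(1)[OF P s] by (simp add: LL_GL f_def)
    finally show ?thesis .
  qed
  have Dv_eq: "Dv = (\<integral>y. ft y * ln (ft y) - ft y * ln (f y) \<partial>lborel)"
  proof -
    have e: "En s Pt = (\<integral>y. ft y * ln (ft y) \<partial>lborel)" by (simp add: En_def ft_def)
    show ?thesis unfolding Dv_def cross[symmetric] Pt_def[symmetric] e Bochner_Integration.integral_diff[OF i1 i2] ..
  qed
  have ift: "integrable lborel ft" unfolding ft_def by (rule out_dens_int1(1)[OF Pt s])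
  have iff: "integrable lborel f" unfolding f_def by (rule out_dens_int1(1)[OF P s])
  have zero: "(\<integral>y. ft y - f y \<partial>lborel) = 0"
    using out_dens_int1(2)[OF Pt s] out_dens_int1(2)[OF P s] ift iff
    by (simp add: Bochner_Integration.integral_diff ft_def f_def)
  have lo: "ft y - f y \<le> ft y * ln (ft y) - ft y * ln (f y)" for y
  proof -
    have "ln (f y / ft y) \<le> f y / ft y - 1" using fp ftp by (intro ln_le_minus_one) (simp add: fp ftp)
    then have "ln (f y) - ln (ft y) \<le> f y / ft y - 1" using fp[of y] ftp[of y] by (simp add: ln_div)
    then have "ft y * (ln (f y) - ln (ft y)) \<le> ft y * (f y / ft y - 1)"
      using ftp[of y] by (intro mult_left_mono) auto
    then show ?thesis using ftp[of y] by (simp add: algebra_simps)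
  qed
  have hi: "ft y * ln (ft y) - ft y * ln (f y) \<le> t\<^sup>2 * ((g y - f y)\<^sup>2 / f y) + (ft y - f y)" for y
  proof -
    have "ln (ft y / f y) \<le> ft y / f y - 1" using fp ftp by (intro ln_le_minus_one) (simp add: fp ftp)
    then have "ln (ft y) - ln (f y) \<le> ft y / f y - 1" using fp[of y] ftp[of y] by (simp add: ln_div)
    then have "ft y * (ln (ft y) - ln (f y)) \<le> ft y * (ft y / f y - 1)"
      using ftp[of y] by (intro mult_left_mono) auto
    also have "ft y * (ft y / f y - 1) = (ft y - f y)\<^sup>2 / f y + (ft y - f y)"
      using fp[of y] by (simp add: field_simps power2_eq_square)
    also have "(ft y - f y)\<^sup>2 = t\<^sup>2 * (g y - f y)\<^sup>2"
      unfolding ft_eq by (simp add: power2_eq_square algebra_simps)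
    finally show ?thesis by (simp add: algebra_simps)
  qed
  have idv: "integrable lborel (\<lambda>y. ft y * ln (ft y) - ft y * ln (f y))" using i1 i2 by auto
  have ichi: "integrable lborel (\<lambda>y. (g y - f y)\<^sup>2 / f y)"
    unfolding g_def f_def by (rule chi_int[OF P s x0])
  show "0 \<le> Dv"
  proof -
    have "(\<integral>y. ft y - f y \<partial>lborel) \<le> Dv"
      unfolding Dv_eq by (rule integral_mono[OF _ idv lo]) (use ift iff in auto)
    then show ?thesis using zero by simp
  qed
  show "Dv \<le> t\<^sup>2 * (\<integral>y. (gauss_dens s x0 y - out_dens s P y)\<^sup>2 / out_dens s P y \<partial>lborel)"
  proof -
    have ib: "integrable lborel (\<lambda>y. t\<^sup>2 * ((g y - f y)\<^sup>2 / f y) + (ft y - f y))"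
      by (intro Bochner_Integration.integrable_add integrable_mult_right Bochner_Integration.integrable_diff ichi ift iff)
    have "Dv \<le> (\<integral>y. t\<^sup>2 * ((g y - f y)\<^sup>2 / f y) + (ft y - f y) \<partial>lborel)"
      unfolding Dv_eq by (rule integral_mono[OF idv ib hi])
    also have "\<dots> = t\<^sup>2 * (\<integral>y. (g y - f y)\<^sup>2 / f y \<partial>lborel) + (\<integral>y. ft y - f y \<partial>lborel)"
      using ichi ift iff by (subst Bochner_Integration.integral_add) (auto simp del: times_divide_eq_right)
    finally show ?thesis using zero by (simp add: g_def f_def)
  qed
qed

lemma gauss_tendsto:
  assumes "X \<longlonglongrightarrow> x0" and s: "0 < s"
  shows "(\<lambda>k. gauss_dens s (X k) y) \<longlonglongrightarrow> gauss_dens s x0 (y::'a::euclidean_space)"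
  unfolding gauss_dens_def using s by (intro tendsto_intros assms) auto

lemma gauss_dom:
  assumes s: "0 < s" and r: "norm (xk - x0) \<le> r"
  shows "gauss_dens s xk y \<le> (gauss_dens s (0::'a) 0 * exp (r\<^sup>2 / (2 * s)) / gauss_dens (2 * s) (0::'a) 0) * gauss_dens (2 * s) x0 (y::'a::euclidean_space)"
proof -
  define k where "k = gauss_dens s (0::'a) 0"
  define k2 where "k2 = gauss_dens (2 * s) (0::'a) 0"
  have k: "0 < k" and k2: "0 < k2" using s by (auto simp: k_def k2_def gauss_k_pos)
  have "(norm (y - x0))\<^sup>2 \<le> 2 * (norm (y - x0 - (xk - x0)))\<^sup>2 + 2 * (norm (xk - x0))\<^sup>2"
    by (rule norm_sq_le)
  moreover have "(norm (xk - x0))\<^sup>2 \<le> r\<^sup>2" using r by (simp add: power_mono)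
  ultimately have n: "(norm (y - x0))\<^sup>2 \<le> 2 * (norm (y - xk))\<^sup>2 + 2 * r\<^sup>2" by simp
  have "- (norm (y - xk))\<^sup>2 / (2 * s) \<le> r\<^sup>2 / (2 * s) + - (norm (y - x0))\<^sup>2 / (2 * (2 * s))"
    using n s by (simp add: field_simps)
  then have "exp (- (norm (y - xk))\<^sup>2 / (2 * s)) \<le> exp (r\<^sup>2 / (2 * s)) * exp (- (norm (y - x0))\<^sup>2 / (2 * (2 * s)))"
    by (simp add: exp_add[symmetric] del: exp_le_cancel_iff) (simp add: exp_add[symmetric])
  then have "k * exp (- (norm (y - xk))\<^sup>2 / (2 * s)) \<le> k * (exp (r\<^sup>2 / (2 * s)) * exp (- (norm (y - x0))\<^sup>2 / (2 * (2 * s))))"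
    using k by (intro mult_left_mono) auto
  also have "\<dots> = (k * exp (r\<^sup>2 / (2 * s)) / k2) * (k2 * exp (- (norm (y - x0))\<^sup>2 / (2 * (2 * s))))"
    using k2 by simp
  finally show ?thesis
    unfolding gauss_eq_k[of s xk y] gauss_eq_k[of "2 * s" x0 y] k_def[symmetric] k2_def[symmetric] .
qed

lemma GL_cont:
  fixes h :: "'a::euclidean_space \<Rightarrow> real"
  assumes s: "0 < s" and hm[measurable]: "h \<in> borel_measurable borel"
    and hb: "\<And>y. \<bar>h y\<bar> \<le> a + b * (norm y)\<^sup>2" and b: "0 \<le> b"
  shows "continuous (at x0) (GL s h)"
  unfolding continuous_at_sequentially
proof (intro allI impI)
  fix X :: "nat \<Rightarrow> 'a" assume X: "X \<longlonglongrightarrow> x0"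
  have "(\<lambda>k. X k - x0) \<longlonglongrightarrow> 0" using X by (simp add: LIM_zero)
  then have "Bseq (\<lambda>k. X k - x0)" by (intro convergent_imp_Bseq convergentI)
  then obtain r where r: "0 < r" "\<And>k. norm (X k - x0) \<le> r" by (auto elim: BseqE)
  have a: "0 \<le> a" using hb[of 0] by simp
  define C where "C = gauss_dens s (0::'a) 0 * exp (r\<^sup>2 / (2 * s)) / gauss_dens (2 * s) (0::'a) 0"
  have C: "0 \<le> C" using s by (simp add: C_def)
  define w where "w y = C * (gauss_dens (2 * s) x0 y * (a + b * (norm y)\<^sup>2))" for y
  have s2: "0 < 2 * s" using s by simp
  have iw: "integrable lborel w"
    unfolding w_def using quad_int(1)[OF s2 _ _ b, of "\<lambda>y. a + b * (norm y)\<^sup>2" a x0] a b by auto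
  show "((GL s h) \<circ> X) \<longlonglongrightarrow> GL s h x0"
    unfolding comp_def GL_def
  proof (rule integral_dominated_convergence[OF _ _ iw])
    show "AE y in lborel. (\<lambda>k. gauss_dens s (X k) y * h y) \<longlonglongrightarrow> gauss_dens s x0 y * h y"
      by (intro AE_I2 tendsto_intros gauss_tendsto[OF X s])
    show "AE y in lborel. norm (gauss_dens s (X k) y * h y) \<le> w y" for k
    proof (rule AE_I2)
      fix y
      have "norm (gauss_dens s (X k) y * h y) = gauss_dens s (X k) y * \<bar>h y\<bar>" by (simp add: abs_mult)
      also have "\<dots> \<le> gauss_dens s (X k) y * (a + b * (norm y)\<^sup>2)" by (intro mult_left_mono hb) simp
      also have "\<dots> \<le> (C * gauss_dens (2 * s) x0 y) * (a + b * (norm y)\<^sup>2)"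
        using gauss_dom[OF s r(2)[of k], of y] a b by (intro mult_right_mono) (auto simp: C_def)
      finally show "norm (gauss_dens s (X k) y * h y) \<le> w y" by (simp add: w_def ac_simps)
    qed
  qed measurable
qed

lemma F_mix_ge:
  fixes P :: "'a::euclidean_space measure"
  assumes P: "input_dist R P" and s1: "0 < s1" and s12: "s1 < s2" and x0: "norm x0 \<le> R"
    and t: "0 \<le> t" "t \<le> 1"
  shows "(1 - t) * (mutual_info s1 P - mutual_info s2 P) + t * Xi s1 s2 P x0
           - t\<^sup>2 * (\<integral>y. (gauss_dens s1 x0 y - out_dens s1 P y)\<^sup>2 / out_dens s1 P y \<partial>lborel)
         \<le> mutual_info s1 (mixm t x0 P) - mutual_info s2 (mixm t x0 P)"
proof -
  have s2: "0 < s2" using s1 s12 by simp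
  have Pt: "input_dist R (mixm t x0 P)" by (rule mix_input[OF P x0 t])
  define K where "K = ln (gauss_dens s1 (0::'a) 0) - ln (gauss_dens s2 (0::'a) 0)"
  define chi_v where "chi_v = (\<integral>y. (gauss_dens s1 x0 y - out_dens s1 P y)\<^sup>2 / out_dens s1 P y \<partial>lborel)"
  note a1 = En_mix(2)[OF P s1 x0 t] and a2 = En_mix(1)[OF P s2 x0 t]
  have eFt: "mutual_info s1 (mixm t x0 P) - mutual_info s2 (mixm t x0 P) = K - En s1 (mixm t x0 P) + En s2 (mixm t x0 P)"
    using F_En[OF Pt s1 s2] by (simp add: K_def)
  have eF: "mutual_info s1 P - mutual_info s2 P = K - En s1 P + En s2 P"
    using F_En[OF P s1 s2] by (simp add: K_def)
  have eX: "Xi s1 s2 P x0 = K - LL s1 P x0 + LL s2 P x0"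
    using Xi_formula[OF P s1 s2] by (simp add: K_def)
  have alg: "(1 - t) * (K - En s1 P + En s2 P) + t * (K - LL s1 P x0 + LL s2 P x0)
     = K - (t * LL s1 P x0 + (1 - t) * En s1 P) + (t * LL s2 P x0 + (1 - t) * En s2 P)"
    by (simp add: algebra_simps)
  show ?thesis unfolding eFt eF eX alg using a1 a2 by (simp add: chi_v_def)
qed

lemma small_t:
  fixes a b :: real
  assumes h: "\<And>t. 0 < t \<Longrightarrow> t \<le> 1 \<Longrightarrow> a \<le> t * b" and b: "0 \<le> b"
  shows "a \<le> 0"
proof (rule ccontr)
  assume "\<not> a \<le> 0" then have a: "0 < a" by simp
  define t where "t = min 1 (a / (2 * b + 2))"
  have t0: "0 < t" using a b by (simp add: t_def)
  have t1: "t \<le> 1" by (simp add: t_def)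
  have "t * b \<le> (a / (2 * b + 2)) * b" using b by (intro mult_right_mono) (auto simp: t_def)
  also have "\<dots> < a"
  proof -
    have d: "0 < 2 * b + 2" using b by simp
    have "a * b < a * (2 * b + 2)" using a b by (intro mult_strict_left_mono) auto
    then show ?thesis using d by (simp add: pos_divide_less_eq)
  qed
  finally show False using h[OF t0 t1] by simp
qed

lemma LL_Q_bound:
  fixes Q :: "'a::euclidean_space measure"
  assumes Q: "input_dist R Q" and s: "0 < s"
  shows "\<bar>\<integral>x. LL s Q x \<partial>Q\<bar> \<le> cA s R TYPE('a) + (1 / s) * (2 * real DIM('a) * s + 2 * R\<^sup>2)"
proof -
  interpret prob_space Q using input_distD[OF Q] by simp
  define B where "B = cA s R TYPE('a) + (1 / s) * (2 * real DIM('a) * s + 2 * R\<^sup>2)"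
  have ae: "AE x in Q. \<bar>LL s Q x\<bar> \<le> B"
    using input_distD(4)[OF Q]
  proof eventually_elim
    case (elim x)
    have "(norm x)\<^sup>2 \<le> R\<^sup>2" using elim by (simp add: power_mono)
    then have "(1 / s) * (2 * real DIM('a) * s + 2 * (norm x)\<^sup>2) \<le> (1 / s) * (2 * real DIM('a) * s + 2 * R\<^sup>2)"
      using s by (intro mult_left_mono) auto
    then show ?case using LL_int(2)[OF Q s, of x] by (simp add: B_def)
  qed
  have i: "integrable Q (LL s Q)" by (rule LL_Q_int[OF Q s])
  have "\<bar>\<integral>x. LL s Q x \<partial>Q\<bar> \<le> (\<integral>x. \<bar>LL s Q x\<bar> \<partial>Q)"
    using integral_norm_bound[of Q "LL s Q"] by simp
  also have "\<dots> \<le> (\<integral>x. B \<partial>Q)"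
    by (rule integral_mono_AE) (use i ae in auto)
  also have "\<dots> = B" by (simp add: prob_space)
  finally show ?thesis by (simp add: B_def)
qed

lemma F_bound:
  fixes Q :: "'a::euclidean_space measure"
  assumes Q: "input_dist R Q" and s1: "0 < s1" and s2: "0 < s2"
  shows "mutual_info s1 Q - mutual_info s2 Q \<le>
     ln (gauss_dens s1 (0::'a) 0) - ln (gauss_dens s2 (0::'a) 0)
     + (cA s1 R TYPE('a) + (1 / s1) * (2 * real DIM('a) * s1 + 2 * R\<^sup>2))
     + (cA s2 R TYPE('a) + (1 / s2) * (2 * real DIM('a) * s2 + 2 * R\<^sup>2))"
  using mi_formula[OF Q s1] mi_formula[OF Q s2] LL_Q_bound[OF Q s1] LL_Q_bound[OF Q s2]
  by (simp add: abs_le_iff)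

lemma cap_upper:
  fixes Q :: "'a::euclidean_space measure"
  assumes Q: "input_dist R Q" and s1: "0 < s1" and s2: "0 < s2"
  shows "mutual_info s1 Q - mutual_info s2 Q \<le> secrecy_cap s1 s2 R TYPE('a)"
  unfolding secrecy_cap_def
proof (rule cSup_upper)
  show "mutual_info s1 Q - mutual_info s2 Q \<in> {mutual_info s1 P - mutual_info s2 (P :: 'a measure) | P. input_dist R P}"
    using Q by auto
  show "bdd_above {mutual_info s1 P - mutual_info s2 (P :: 'a measure) | P. input_dist R P}"
    using F_bound[OF _ s1 s2] by (auto intro!: bdd_aboveI)
qed

lemma F_Xi:
  fixes P :: "'a::euclidean_space measure"
  assumes P: "input_dist R P" and s1: "0 < s1" and s2: "0 < s2"
  shows "integrable P (Xi s1 s2 P)" "mutual_info s1 P - mutual_info s2 P = (\<integral>x. Xi s1 s2 P x \<partial>P)"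
proof -
  interpret prob_space P using input_distD[OF P] by simp
  define K where "K = ln (gauss_dens s1 (0::'a) 0) - ln (gauss_dens s2 (0::'a) 0)"
  have e: "Xi s1 s2 P = (\<lambda>x. K - LL s1 P x + LL s2 P x)"
    using Xi_formula[OF P s1 s2] by (simp add: K_def fun_eq_iff)
  have i1: "integrable P (LL s1 P)" and i2: "integrable P (LL s2 P)" using LL_Q_int[OF P s1] LL_Q_int[OF P s2] .
  show "integrable P (Xi s1 s2 P)" unfolding e using i1 i2 by auto
  have "(\<integral>x. Xi s1 s2 P x \<partial>P) = K - (\<integral>x. LL s1 P x \<partial>P) + (\<integral>x. LL s2 P x \<partial>P)"
    unfolding e using i1 i2 by (simp add: prob_space)
  then show "mutual_info s1 P - mutual_info s2 P = (\<integral>x. Xi s1 s2 P x \<partial>P)"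
    using mi_formula[OF P s1] mi_formula[OF P s2] by (simp add: K_def)
qed

lemma Xi_cont:
  fixes P :: "'a::euclidean_space measure"
  assumes P: "input_dist R P" and s1: "0 < s1" and s2: "0 < s2"
  shows "continuous (at x) (Xi s1 s2 P)"
proof -
  have e: "Xi s1 s2 P = (\<lambda>x. ln (gauss_dens s1 (0::'a) 0) - ln (gauss_dens s2 (0::'a) 0) - GL s1 (\<lambda>y. ln (out_dens s1 P y)) x + GL s2 (\<lambda>y. ln (out_dens s2 P y)) x)"
    using Xi_formula[OF P s1 s2] by (simp add: fun_eq_iff LL_GL)
  have c1: "continuous (at x) (GL s1 (\<lambda>y. ln (out_dens s1 P y)))"
    by (rule GL_cont[OF s1 _ ln_out_bound'[OF P s1]]) (use out_dens_meas[OF P] s1 in auto)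
  have c2: "continuous (at x) (GL s2 (\<lambda>y. ln (out_dens s2 P y)))"
    by (rule GL_cont[OF s2 _ ln_out_bound'[OF P s2]]) (use out_dens_meas[OF P] s2 in auto)
  show ?thesis unfolding e using c1 c2 by (intro continuous_intros)
qed

lemma supp_AE:
  fixes P :: "'a::euclidean_space measure"
  assumes sP: "sets P = sets borel"
  shows "AE x in P. x \<in> supp P"
proof -
  define F where "F = {ball x e | x e. 0 < e \<and> emeasure P (ball x e) = 0}"
  have Fo: "\<And>S. S \<in> F \<Longrightarrow> open S" by (auto simp: F_def)
  obtain F' where F': "F' \<subseteq> F" "countable F'" "\<Union>F' = \<Union>F" using Lindelof[OF Fo] by blast
  have nF: "(\<Union>i\<in>F'. i) \<in> null_sets P"
  proof (rule null_sets_UN'[OF F'(2)])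
    fix i assume "i \<in> F'"
    then obtain x e where "i = ball x e" "emeasure P (ball x e) = 0" using F'(1) by (auto simp: F_def)
    then show "i \<in> null_sets P" using sP by (simp add: null_sets_def)
  qed
  show ?thesis
  proof (rule AE_I'[OF nF])
    show "{x \<in> space P. x \<notin> supp P} \<subseteq> (\<Union>i\<in>F'. i)"
    proof
      fix x assume "x \<in> {x \<in> space P. x \<notin> supp P}"
      then obtain e where e: "0 < e" "\<not> emeasure P (ball x e) > 0" by (auto simp: supp_def)
      then have "ball x e \<in> F" by (auto simp: F_def)
      then have "x \<in> \<Union>F" by (rule UnionI) (use e in simp)
      then show "x \<in> (\<Union>i\<in>F'. i)" using F'(3) by auto
    qed
  qed
qed

lemma supp_cball:
  fixes P :: "'a::euclidean_space measure"
  assumes P: "input_dist R P"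
  shows "supp P \<subseteq> cball 0 R"
proof
  fix x assume x: "x \<in> supp P"
  show "x \<in> cball 0 R"
  proof (rule ccontr)
    assume "x \<notin> cball 0 R"
    then have xR: "R < norm x" by simp
    have sub: "ball x (norm x - R) \<subseteq> - cball 0 R"
    proof
      fix y assume "y \<in> ball x (norm x - R)"
      then have "dist x y < norm x - R" by simp
      moreover have "norm x \<le> norm y + dist x y" by (metis dist_norm norm_triangle_sub norm_minus_commute dist_commute)
      ultimately show "y \<in> - cball 0 R" by simp
    qed
    have "emeasure P (ball x (norm x - R)) \<le> emeasure P (- cball 0 R)"
      using input_distD(2)[OF P] by (intro emeasure_mono sub) auto
    also have "\<dots> = 0" using P by (simp add: input_dist_def)
    finally have "emeasure P (ball x (norm x - R)) = 0" by simp
    moreover have "emeasure P (ball x (norm x - R)) > 0" using x xR by (simp add: supp_def)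
    ultimately show False by simp
  qed
qed


theorem lemma1:
  fixes s1 s2 R :: real and P :: "'a::euclidean_space measure"
  assumes "0 < s1" and "s1 < s2" and "0 < R"
    and "input_dist R P"
  shows "(\<forall>x::'a. Xi s1 s2 P x = (\<integral>y. gauss_dens s1 x y * gfun s1 s2 P y \<partial>lborel))
    \<and> (mutual_info s1 P - mutual_info s2 P = secrecy_cap s1 s2 R TYPE('a)
       \<longleftrightarrow> (\<forall>x\<in>supp P. Xi s1 s2 P x = secrecy_cap s1 s2 R TYPE('a))
         \<and> (\<forall>x\<in>cball 0 R. Xi s1 s2 P x \<le> secrecy_cap s1 s2 R TYPE('a)))"
proof -
  note s1 = assms(1) and s12 = assms(2) and P = assms(4)
  have s2: "0 < s2" using s1 s12 by simp
  interpret prob_space P using input_distD[OF P] by simp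
  define C where "C = secrecy_cap s1 s2 R TYPE('a)"
  have p1: "\<forall>x::'a. Xi s1 s2 P x = (\<integral>y. gauss_dens s1 x y * gfun s1 s2 P y \<partial>lborel)"
    using part1[OF P s1 s12] by blast
  note FX = F_Xi[OF P s1 s2]
  have AEsupp: "AE x in P. x \<in> supp P" by (rule supp_AE[OF input_distD(2)[OF P]])
  have fwd: "(\<forall>x\<in>supp P. Xi s1 s2 P x = C) \<and> (\<forall>x\<in>cball 0 R. Xi s1 s2 P x \<le> C)"
    if opt: "mutual_info s1 P - mutual_info s2 P = C"
  proof -
    have le: "Xi s1 s2 P x0 \<le> C" if x0: "x0 \<in> cball 0 R" for x0
    proof -
      have nx0: "norm x0 \<le> R" using x0 by simp
      define chi_v where "chi_v = (\<integral>y. (gauss_dens s1 x0 y - out_dens s1 P y)\<^sup>2 / out_dens s1 P y \<partial>lborel)"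
      have chi: "0 \<le> chi_v" unfolding chi_v_def
        by (rule Bochner_Integration.integral_nonneg) (use out_dens_pos[OF P s1] in \<open>auto intro!: divide_nonneg_nonneg simp: less_imp_le\<close>)
      have "Xi s1 s2 P x0 - C \<le> 0"
      proof (rule small_t[OF _ chi])
        fix t :: real assume t: "0 < t" "t \<le> 1"
        have t': "0 \<le> t" "t \<le> 1" using t by auto
        have "(1 - t) * C + t * Xi s1 s2 P x0 - t\<^sup>2 * chi_v
            \<le> mutual_info s1 (mixm t x0 P) - mutual_info s2 (mixm t x0 P)"
          using F_mix_ge[OF P s1 s12 nx0 t'] opt by (simp add: chi_v_def)
        also have "\<dots> \<le> C" unfolding C_def by (rule cap_upper[OF mix_input[OF P nx0 t'] s1 s2])
        finally have "t * (Xi s1 s2 P x0 - C) \<le> t * (t * chi_v)"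
          by (simp add: algebra_simps power2_eq_square)
        then show "Xi s1 s2 P x0 - C \<le> t * chi_v" using t by simp
      qed
      then show ?thesis by simp
    qed
    have AEc: "AE x in P. x \<in> cball 0 R" using input_distD(4)[OF P] by simp
    have ae0: "AE x in P. C - Xi s1 s2 P x = 0"
    proof -
      have i: "integrable P (\<lambda>x. C - Xi s1 s2 P x)" using FX(1) by auto
      have nn: "AE x in P. 0 \<le> C - Xi s1 s2 P x" using AEc by eventually_elim (use le in auto)
      have "(\<integral>x. C - Xi s1 s2 P x \<partial>P) = 0"
        using FX(1) opt FX(2) by (simp add: prob_space)
      then show ?thesis using integral_nonneg_eq_0_iff_AE[OF i nn] by simp
    qed
    then obtain N where N: "{x \<in> space P. \<not> C - Xi s1 s2 P x = 0} \<subseteq> N" "emeasure P N = 0" "N \<in> sets P"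
      by (rule AE_E)
    have eq: "Xi s1 s2 P x = C" if x: "x \<in> supp P" for x
    proof (rule ccontr)
      assume ne: "Xi s1 s2 P x \<noteq> C"
      have xc: "x \<in> cball 0 R" using supp_cball[OF P] x by auto
      then have lt: "Xi s1 s2 P x < C" using le[OF xc] ne by simp
      have "((Xi s1 s2 P) \<longlongrightarrow> Xi s1 s2 P x) (at x)"
        using Xi_cont[OF P s1 s2, of x] by (simp add: continuous_at)
      then have "eventually (\<lambda>y. Xi s1 s2 P y < C) (at x)" using lt by (rule order_tendstoD)
      then obtain d where d: "0 < d" "\<And>y. y \<noteq> x \<Longrightarrow> dist y x < d \<Longrightarrow> Xi s1 s2 P y < C"
        by (auto simp: eventually_at)
      have "ball x d \<subseteq> N"
      proof
        fix y assume y: "y \<in> ball x d"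
        have "Xi s1 s2 P y < C"
          using d(2)[of y] lt y by (cases "y = x") (auto simp: dist_commute)
        then show "y \<in> N" using N(1) input_distD(3)[OF P] by auto
      qed
      then have "emeasure P (ball x d) \<le> emeasure P N" by (intro emeasure_mono N(3))
      then have "emeasure P (ball x d) = 0" using N(2) by simp
      moreover have "0 < emeasure P (ball x d)" using x d(1) by (simp add: supp_def)
      ultimately show False by simp
    qed
    show ?thesis using eq le by blast
  qed
  have bwd: "mutual_info s1 P - mutual_info s2 P = C"
    if h: "(\<forall>x\<in>supp P. Xi s1 s2 P x = C)" for dummy :: bool
  proof -
    have "(\<integral>x. Xi s1 s2 P x \<partial>P) = (\<integral>x. C \<partial>P)"
      by (rule integral_cong_AE) (use FX(1) AEsupp h in \<open>auto elim: AE_mp\<close>)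
    then show ?thesis using FX(2) by (simp add: prob_space)
  qed
  show ?thesis unfolding C_def[symmetric] using p1 fwd bwd by blast
qed


end
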